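(* Let $G$ be a unicyclic graph. Then $G$ has exactly three distinct normalized Laplacian eigenvalues if and only if $G=C_4$ or $G=C_5$.
   Context: A unicyclic graph is a connected graph with $n$ vertices and $n$ edges. $C_n$ denotes the cycle on $n$ vertices. For a graph with adjacency matrix $A$ and diagonal degree matrix $D$ (no isolated vertices), the normalized Laplacian is $\mathcal{L}=I-D^{-1/2}AD^{-1/2}$, and its eigenvalues are the normalized Laplacian eigenvalues. *)

theory Defs
  imports Complex_Main
begin

definition simple_graph :: "'a set \<Rightarrow> ('a \<Rightarrow> 'a \<Rightarrow> bool) \<Rightarrow> bool" where
  "simple_graph V E \<longleftrightarrow> finite V \<and> (\<forall>u v. E u v \<longrightarrow> u \<in> V \<and> v \<in> V)
     \<and> (\<forall>u v. E u v \<longrightarrow> E v u) \<and> (\<forall>u. \<not> E u u)"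

definition graph_edges :: "('a \<Rightarrow> 'a \<Rightarrow> bool) \<Rightarrow> 'a set set" where
  "graph_edges E = {{u, v} | u v. E u v}"

definition connected_graph :: "'a set \<Rightarrow> ('a \<Rightarrow> 'a \<Rightarrow> bool) \<Rightarrow> bool" where
  "connected_graph V E \<longleftrightarrow> V \<noteq> {} \<and> (\<forall>u\<in>V. \<forall>v\<in>V. E\<^sup>*\<^sup>* u v)"

definition unicyclic :: "'a set \<Rightarrow> ('a \<Rightarrow> 'a \<Rightarrow> bool) \<Rightarrow> bool" where
  "unicyclic V E \<longleftrightarrow> simple_graph V E \<and> connected_graph V E
     \<and> card (graph_edges E) = card V"

definition degree :: "'a set \<Rightarrow> ('a \<Rightarrow> 'a \<Rightarrow> bool) \<Rightarrow> 'a \<Rightarrow> nat" where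
  "degree V E u = card {v \<in> V. E u v}"

text \<open>Entries of the normalized Laplacian I - D^(-1/2) A D^(-1/2), indexed by V x V.\<close>
definition nlap :: "'a set \<Rightarrow> ('a \<Rightarrow> 'a \<Rightarrow> bool) \<Rightarrow> 'a \<Rightarrow> 'a \<Rightarrow> real" where
  "nlap V E u v = (if u = v then 1 else 0)
     - (if E u v then 1 / sqrt (real (degree V E u) * real (degree V E v)) else 0)"

definition nlap_eigenvalue :: "'a set \<Rightarrow> ('a \<Rightarrow> 'a \<Rightarrow> bool) \<Rightarrow> real \<Rightarrow> bool" where
  "nlap_eigenvalue V E \<mu> \<longleftrightarrow> (\<exists>x :: 'a \<Rightarrow> real. (\<exists>u\<in>V. x u \<noteq> 0)
     \<and> (\<forall>u\<in>V. (\<Sum>v\<in>V. nlap V E u v * x v) = \<mu> * x u))"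

definition is_cycle_graph :: "'a set \<Rightarrow> ('a \<Rightarrow> 'a \<Rightarrow> bool) \<Rightarrow> nat \<Rightarrow> bool" where
  "is_cycle_graph V E n \<longleftrightarrow> (\<exists>f. bij_betw f V {..<n} \<and>
     (\<forall>u\<in>V. \<forall>v\<in>V. E u v \<longleftrightarrow> ((f u + 1) mod n = f v \<or> (f v + 1) mod n = f u)))"

end

theory Submission
  imports Defs "HOL-Computational_Algebra.Fundamental_Theorem_Algebra"
begin


lemma lin_dep:
  fixes f :: "'i \<Rightarrow> 'a \<Rightarrow> 'b::field"
  assumes "finite V" "finite I" "card V < card I"
  shows "\<exists>c. (\<exists>i\<in>I. c i \<noteq> 0) \<and> (\<forall>u\<in>V. (\<Sum>i\<in>I. c i * f i u) = 0)"
  using assms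
proof (induction V arbitrary: I f rule: finite_induct)
  case empty
  then have "I \<noteq> {}" by auto
  then show ?case by (auto intro!: exI[of _ "\<lambda>_. 1"])
next
  case (insert a V)
  show ?case
  proof (cases "\<forall>i\<in>I. f i a = 0")
    case True
    have "card V < card I" using insert by simp
    from insert.IH[OF insert.prems(1) this]
    obtain c where "\<exists>i\<in>I. c i \<noteq> 0" "\<forall>u\<in>V. (\<Sum>i\<in>I. c i * f i u) = 0" by blast
    then show ?thesis using True by (intro exI[of _ c]) auto
  next
    case False
    then obtain j where j: "j \<in> I" "f j a \<noteq> 0" by auto
    define I' where "I' = I - {j}"
    define g where "g i u = f i u - (f i a / f j a) * f j u" for i u
    have fI': "finite I'" using insert.prems by (simp add: I'_def)
    moreover have "card V < card I'" using insert.prems insert.hyps j by (simp add: I'_def)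
    ultimately obtain c' where c': "\<exists>i\<in>I'. c' i \<noteq> 0" "\<forall>u\<in>V. (\<Sum>i\<in>I'. c' i * g i u) = 0"
      using insert.IH by blast
    define c where "c i = (if i = j then - (\<Sum>i\<in>I'. c' i * f i a) / f j a else c' i)" for i
    have cj: "c j = - (\<Sum>i\<in>I'. c' i * f i a) / f j a" by (simp add: c_def)
    have key: "(\<Sum>i\<in>I. c i * f i u) = (\<Sum>i\<in>I'. c' i * g i u)" for u
    proof -
      have "(\<Sum>i\<in>I. c i * f i u) = c j * f j u + (\<Sum>i\<in>I'. c i * f i u)"
        using j insert.prems(1) unfolding I'_def by (simp add: sum.remove)
      also have "(\<Sum>i\<in>I'. c i * f i u) = (\<Sum>i\<in>I'. c' i * f i u)"
        by (rule sum.cong) (auto simp: c_def I'_def)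
      finally have A: "(\<Sum>i\<in>I. c i * f i u) = c j * f j u + (\<Sum>i\<in>I'. c' i * f i u)" .
      have B: "(\<Sum>i\<in>I'. c' i * g i u) = (\<Sum>i\<in>I'. c' i * f i u) - (\<Sum>i\<in>I'. c' i * f i a) / f j a * f j u"
        by (simp add: g_def right_diff_distrib sum_subtractf sum_distrib_right sum_divide_distrib mult.assoc)
      show ?thesis unfolding A B cj by (simp add: algebra_simps)
    qed
    show ?thesis
    proof (intro exI[of _ c] conjI)
      show "\<exists>i\<in>I. c i \<noteq> 0" using c'(1) by (auto simp: c_def I'_def)
      show "\<forall>u\<in>insert a V. (\<Sum>i\<in>I. c i * f i u) = 0"
        using c'(2) by (auto simp: key g_def j)
    qed
  qed
qed

locale symmat =
  fixes V :: "'a set" and M :: "'a \<Rightarrow> 'a \<Rightarrow> real"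
  assumes finV: "finite V" and symM: "M u v = M v u"
begin

definition T :: "('a \<Rightarrow> complex) \<Rightarrow> 'a \<Rightarrow> complex" where
  "T x u = (\<Sum>v\<in>V. complex_of_real (M u v) * x v)"

definition sh :: "complex \<Rightarrow> ('a \<Rightarrow> complex) \<Rightarrow> 'a \<Rightarrow> complex" where
  "sh z x u = T x u - z * x u"

fun qop :: "real list \<Rightarrow> ('a \<Rightarrow> complex) \<Rightarrow> 'a \<Rightarrow> complex" where
  "qop [] x = x"
| "qop (r # rs) x = sh (complex_of_real r) (qop rs x)"

definition zeroV :: "('a \<Rightarrow> complex) \<Rightarrow> bool" where "zeroV x \<longleftrightarrow> (\<forall>u\<in>V. x u = 0)"

definition eig :: "real \<Rightarrow> bool" where
  "eig \<mu> \<longleftrightarrow> (\<exists>x::'a\<Rightarrow>real. (\<exists>u\<in>V. x u \<noteq> 0) \<and> (\<forall>u\<in>V. (\<Sum>v\<in>V. M u v * x v) = \<mu> * x u))"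

lemma T_diff: "T (\<lambda>u. x u - c * y u) = (\<lambda>u. T x u - c * T y u)"
  by (rule ext) (simp add: T_def sum_subtractf sum_distrib_left algebra_simps)

lemma T_cong: "(\<forall>u\<in>V. x u = y u) \<Longrightarrow> T x = T y"
  by (rule ext) (simp add: T_def)

lemma sh_comm: "sh a (sh b x) = sh b (sh a x)"
  unfolding sh_def[abs_def] by (rule ext) (simp add: T_diff algebra_simps)

lemma qop_sh: "qop rs (sh z x) = sh z (qop rs x)"
  by (induction rs) (auto simp: sh_comm)

lemma qop_remove: "r \<in> set rs \<Longrightarrow> qop rs x = sh (of_real r) (qop (remove1 r rs) x)"
proof (induction rs)
  case Nil then show ?case by simp
next
  case (Cons s rs)
  show ?case
  proof (cases "s = r")
    case True then show ?thesis by simp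
  next
    case False
    then have "r \<in> set rs" using Cons by simp
    then show ?thesis using Cons False by (simp add: sh_comm)
  qed
qed

lemma zeroV_qop: "zeroV x \<Longrightarrow> zeroV (qop rs x)"
proof (induction rs)
  case Nil then show ?case by simp
next
  case (Cons r rs)
  then have z: "zeroV (qop rs x)" by simp
  then have "T (qop rs x) = T (\<lambda>_. 0)" by (intro T_cong) (auto simp: zeroV_def)
  then show ?case using z by (simp add: zeroV_def sh_def T_def)
qed

definition inner :: "('a \<Rightarrow> complex) \<Rightarrow> ('a \<Rightarrow> complex) \<Rightarrow> complex" where
  "inner x y = (\<Sum>u\<in>V. cnj (x u) * y u)"

lemma inner_T: "inner x (T y) = inner (T x) y"
proof -
  have "inner x (T y) = (\<Sum>u\<in>V. \<Sum>v\<in>V. cnj (x u) * of_real (M u v) * y v)"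
    by (simp add: inner_def T_def sum_distrib_left mult.assoc)
  also have "\<dots> = (\<Sum>v\<in>V. \<Sum>u\<in>V. cnj (x u) * of_real (M u v) * y v)"
    by (rule sum.swap)
  also have "\<dots> = inner (T x) y"
    by (simp add: inner_def T_def sum_distrib_left sum_distrib_right symM algebra_simps)
  finally show ?thesis .
qed

lemma inner_sh: "cnj z = z \<Longrightarrow> inner x (sh z y) = inner (sh z x) y"
proof -
  assume z: "cnj z = z"
  have "inner x (sh z y) = inner x (T y) - z * inner x y"
    by (simp add: inner_def sh_def right_diff_distrib sum_subtractf sum_distrib_left algebra_simps)
  moreover have "inner (sh z x) y = inner (T x) y - cnj z * inner x y"
    by (simp add: inner_def sh_def left_diff_distrib sum_subtractf sum_distrib_left algebra_simps)
  ultimately show ?thesis using z inner_T by simp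
qed

lemma inner_self: "inner x x = 0 \<Longrightarrow> zeroV x"
proof -
  assume h: "inner x x = 0"
  have pw: "cnj (x u) * x u = of_real ((norm (x u))\<^sup>2)" for u
    by (metis complex_norm_square mult.commute)
  have "inner x x = of_real (\<Sum>u\<in>V. (norm (x u))\<^sup>2)"
    by (simp only: inner_def pw of_real_sum)
  with h have "(\<Sum>u\<in>V. (norm (x u))\<^sup>2) = 0" by (metis of_real_eq_0_iff)
  then have "\<forall>u\<in>V. (norm (x u))\<^sup>2 = 0"
    using finV by (subst (asm) sum_nonneg_eq_0_iff) auto
  then show ?thesis by (simp add: zeroV_def)
qed

lemma inner_zero: "zeroV y \<Longrightarrow> inner x y = 0"
  by (simp add: zeroV_def inner_def)

lemma sq_ker: "zeroV (sh (of_real r) (sh (of_real r) y)) \<Longrightarrow> zeroV (sh (of_real r) y)"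
proof -
  assume h: "zeroV (sh (of_real r) (sh (of_real r) y))"
  have "inner (sh (of_real r) y) (sh (of_real r) y) = inner y (sh (of_real r) (sh (of_real r) y))"
    by (simp add: inner_sh)
  also have "\<dots> = 0" using h by (rule inner_zero)
  finally show ?thesis by (rule inner_self)
qed

lemma eig_of:
  assumes h: "zeroV (sh z x)" and nz: "\<not> zeroV x"
  shows "Im z = 0 \<and> eig (Re z)"
proof -
  have Tx: "\<forall>u\<in>V. T x u = z * x u" using h by (simp add: zeroV_def sh_def)
  have "inner x (T x) = z * inner x x"
    using Tx by (simp add: inner_def sum_distrib_left algebra_simps)
  moreover have "inner (T x) x = cnj z * inner x x"
    using Tx by (simp add: inner_def sum_distrib_left algebra_simps)
  moreover have "inner x x \<noteq> 0" using nz inner_self by blast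
  ultimately have "z = cnj z" using inner_T by (metis mult_right_cancel mult.commute)
  then have imz: "Im z = 0" by (metis cnj.simps(2) neg_equal_zero)
  then have zr: "z = of_real (Re z)" by (simp add: complex_eq_iff)
  have Re_eq: "\<forall>u\<in>V. (\<Sum>v\<in>V. M u v * Re (x v)) = Re z * Re (x u)"
  proof
    fix u assume "u \<in> V"
    then have "T x u = of_real (Re z) * x u" using Tx zr by metis
    then have "Re (T x u) = Re (of_real (Re z) * x u)" by simp
    then show "(\<Sum>v\<in>V. M u v * Re (x v)) = Re z * Re (x u)" by (simp add: T_def Re_sum)
  qed
  have Im_eq: "\<forall>u\<in>V. (\<Sum>v\<in>V. M u v * Im (x v)) = Re z * Im (x u)"
  proof
    fix u assume "u \<in> V"
    then have "T x u = of_real (Re z) * x u" using Tx zr by metis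
    then have "Im (T x u) = Im (of_real (Re z) * x u)" by simp
    then show "(\<Sum>v\<in>V. M u v * Im (x v)) = Re z * Im (x u)" by (simp add: T_def Im_sum)
  qed
  obtain u where u: "u \<in> V" "x u \<noteq> 0" using nz by (auto simp: zeroV_def)
  then have "Re (x u) \<noteq> 0 \<or> Im (x u) \<noteq> 0" by (simp add: complex_eq_iff)
  then have "eig (Re z)"
  proof
    assume "Re (x u) \<noteq> 0"
    then show ?thesis unfolding eig_def using u Re_eq by (intro exI[of _ "\<lambda>v. Re (x v)"]) auto
  next
    assume "Im (x u) \<noteq> 0"
    then show ?thesis unfolding eig_def using u Im_eq by (intro exI[of _ "\<lambda>v. Im (x v)"]) auto
  qed
  with imz show ?thesis by simp
qed

definition peval :: "complex poly \<Rightarrow> ('a \<Rightarrow> complex) \<Rightarrow> 'a \<Rightarrow> complex" where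
  "peval p x u = (\<Sum>k\<le>degree p. coeff p k * (T ^^ k) x u)"

lemma peval_bound: "degree p \<le> n \<Longrightarrow> peval p x u = (\<Sum>k\<le>n. coeff p k * (T ^^ k) x u)"
  unfolding peval_def by (rule sum.mono_neutral_left) (auto simp: coeff_eq_0)

lemma Tpow_diff: "(T ^^ k) (\<lambda>u. x u - c * y u) = (\<lambda>u. (T ^^ k) x u - c * (T ^^ k) y u)"
  by (induction k) (simp_all add: T_diff)

lemma peval_lin: "peval ([:-z, 1:] * q) x u = peval q (sh z x) u"
proof -
  define n where "n = degree q"
  have pe: "[:-z, 1:] * q = smult (-z) q + pCons 0 q" by simp
  have dg: "degree ([:-z, 1:] * q) \<le> Suc n"
    using degree_mult_le[of "[:-z,1:]" q] by (simp add: n_def)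
  have L: "peval ([:-z, 1:] * q) x u = (\<Sum>k\<le>n. coeff q k * (T ^^ Suc k) x u) - z * (\<Sum>k\<le>n. coeff q k * (T ^^ k) x u)"
  proof -
    have "peval ([:-z, 1:] * q) x u = (\<Sum>k\<le>Suc n. coeff ([:-z, 1:] * q) k * (T ^^ k) x u)"
      by (rule peval_bound[OF dg])
    also have "\<dots> = (\<Sum>k\<le>Suc n. coeff (pCons 0 q) k * (T ^^ k) x u) - z * (\<Sum>k\<le>Suc n. coeff q k * (T ^^ k) x u)"
      unfolding pe by (simp add: algebra_simps sum.distrib sum_distrib_left sum_subtractf)
    also have "(\<Sum>k\<le>Suc n. coeff q k * (T ^^ k) x u) = (\<Sum>k\<le>n. coeff q k * (T ^^ k) x u)"
      by (simp add: n_def coeff_eq_0)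
    also have "(\<Sum>k\<le>Suc n. coeff (pCons 0 q) k * (T ^^ k) x u) = (\<Sum>k\<le>n. coeff q k * (T ^^ Suc k) x u)"
      by (subst sum.atMost_Suc_shift) simp
    finally show ?thesis .
  qed
  have "peval q (sh z x) u = (\<Sum>k\<le>n. coeff q k * (T ^^ k) (sh z x) u)"
    by (simp add: peval_def n_def)
  also have "\<dots> = (\<Sum>k\<le>n. coeff q k * ((T ^^ Suc k) x u - z * (T ^^ k) x u))"
  proof (rule sum.cong)
    fix k
    have "(T ^^ k) (sh z x) = (T ^^ k) (\<lambda>u. T x u - z * x u)" by (simp add: sh_def[abs_def])
    also have "\<dots> = (\<lambda>u. (T ^^ k) (T x) u - z * (T ^^ k) x u)" by (rule Tpow_diff)
    finally show "coeff q k * (T ^^ k) (sh z x) u = coeff q k * ((T ^^ Suc k) x u - z * (T ^^ k) x u)"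
      by (simp add: funpow_swap1)
  qed simp
  finally show ?thesis unfolding L by (simp add: algebra_simps sum_subtractf sum_distrib_left)
qed

lemma exists_ann: "\<exists>p. p \<noteq> 0 \<and> zeroV (peval p x)"
proof -
  define n where "n = card V"
  have "card V < card {..n}" by (simp add: n_def)
  from lin_dep[OF finV _ this, of "\<lambda>k u. (T ^^ k) x u"]
  obtain c where c: "\<exists>i\<in>{..n}. c i \<noteq> 0" "\<forall>u\<in>V. (\<Sum>i\<le>n. c i * (T ^^ i) x u) = 0" by auto
  define p where "p = (\<Sum>k\<le>n. monom (c k) k)"
  have cp: "coeff p k = (if k \<le> n then c k else 0)" for k
    by (simp add: p_def coeff_sum coeff_monom)
  have dp: "degree p \<le> n" by (rule degree_le) (simp add: cp)
  have "p \<noteq> 0" using c(1) cp by (metis coeff_0 atMost_iff)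
  moreover have "zeroV (peval p x)"
    using c(2) by (simp add: zeroV_def peval_bound[OF dp] cp)
  ultimately show ?thesis by blast
qed

lemma ann_main:
  assumes eigs: "\<And>\<mu>. eig \<mu> \<Longrightarrow> \<mu> \<in> set rs"
  shows "p \<noteq> 0 \<Longrightarrow> zeroV (peval p x) \<Longrightarrow> zeroV (qop rs x)"
proof (induction "degree p" arbitrary: p x rule: less_induct)
  case less
  show ?case
  proof (cases "degree p = 0")
    case True
    then have "peval p x u = coeff p 0 * x u" for u by (simp add: peval_def)
    moreover have "coeff p 0 \<noteq> 0" using True less.prems(1) by (metis leading_coeff_0_iff)
    ultimately have "zeroV x" using less.prems(2) by (simp add: zeroV_def)
    then show ?thesis by (rule zeroV_qop)
  next
    case False
    then have "\<not> constant (poly p)" by (simp add: constant_degree)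
    then obtain z where "poly p z = 0" using fundamental_theorem_of_algebra by blast
    then have "[:-z, 1:] dvd p" by (simp add: dvd_iff_poly_eq_0)
    then obtain q where pq: "p = [:-z, 1:] * q" by (elim dvdE)
    have qnz: "q \<noteq> 0" using pq less.prems(1) by auto
    have "degree ([:-z, 1:] * q) = degree [:-z, 1:] + degree q" by (rule degree_mult_eq) (use qnz in auto)
    then have "degree p = Suc (degree q)" using pq by simp
    then have dq: "degree q < degree p" by simp
    have "peval q (sh z x) u = peval p x u" for u by (metis pq peval_lin)
    then have "zeroV (peval q (sh z x))"
      using less.prems(2) by (simp add: zeroV_def)
    from less.hyps[OF dq qnz this] have h: "zeroV (sh z (qop rs x))" by (simp add: qop_sh)
    show ?thesis
    proof (cases "zeroV (qop rs x)")
      case True then show ?thesis .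
    next
      case False
      from eig_of[OF h False] have "Im z = 0" "eig (Re z)" by auto
      then have zr: "z = of_real (Re z)" and ins: "Re z \<in> set rs"
        using eigs by (auto simp: complex_eq_iff)
      have "qop rs x = sh z (qop (remove1 (Re z) rs) x)"
        using qop_remove[OF ins] zr by metis
      then show ?thesis using h sq_ker zr by metis
    qed
  qed
qed

theorem annihilate:
  assumes "\<And>\<mu>. eig \<mu> \<Longrightarrow> \<mu> \<in> set rs"
  shows "zeroV (qop rs x)"
  using exists_ann[of x] ann_main[OF assms] by blast

definition Tr :: "('a \<Rightarrow> real) \<Rightarrow> 'a \<Rightarrow> real" where
  "Tr x u = (\<Sum>v\<in>V. M u v * x v)"

definition shr :: "real \<Rightarrow> ('a \<Rightarrow> real) \<Rightarrow> 'a \<Rightarrow> real" where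
  "shr r x u = Tr x u - r * x u"

fun qopr :: "real list \<Rightarrow> ('a \<Rightarrow> real) \<Rightarrow> 'a \<Rightarrow> real" where
  "qopr [] x = x"
| "qopr (r # rs) x = shr r (qopr rs x)"

lemma qop_real: "qop rs (\<lambda>u. complex_of_real (x u)) = (\<lambda>u. complex_of_real (qopr rs x u))"
proof (induction rs)
  case Nil then show ?case by simp
next
  case (Cons r rs)
  show ?case by (rule ext) (simp add: Cons sh_def shr_def T_def Tr_def)
qed

theorem annihilate_real:
  assumes "\<And>\<mu>. eig \<mu> \<Longrightarrow> \<mu> \<in> set rs" and "u \<in> V"
  shows "qopr rs x u = 0"
  using annihilate[OF assms(1), of "\<lambda>u. complex_of_real (x u)"] assms(2)
  by (simp add: qop_real zeroV_def)

end


definition nbr :: "'a set \<Rightarrow> ('a \<Rightarrow> 'a \<Rightarrow> bool) \<Rightarrow> 'a \<Rightarrow> 'a set" where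
  "nbr V E u = {v \<in> V. E u v}"

locale ugraph =
  fixes V :: "'a set" and E :: "'a \<Rightarrow> 'a \<Rightarrow> bool"
  assumes sg: "simple_graph V E"
begin

lemma finV': "finite V" using sg by (simp add: simple_graph_def)
lemma Ein: "E u v \<Longrightarrow> u \<in> V \<and> v \<in> V" using sg by (simp add: simple_graph_def)
lemma Esym: "E u v \<Longrightarrow> E v u" using sg by (simp add: simple_graph_def)
lemma Eirr: "\<not> E u u" using sg by (simp add: simple_graph_def)
lemma Eneq: "E u v \<Longrightarrow> u \<noteq> v" using Eirr by blast

lemma nlap_sym: "nlap V E u v = nlap V E v u"
  unfolding nlap_def using Esym by (auto simp: mult.commute)

sublocale symmat V "nlap V E"
  by unfold_locales (auto simp: finV' nlap_sym)

lemma eig_iff: "eig \<mu> \<longleftrightarrow> nlap_eigenvalue V E \<mu>"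
  by (simp add: eig_def nlap_eigenvalue_def)

lemma degree_pos: "E u v \<Longrightarrow> Defs.degree V E u > 0"
proof -
  assume "E u v"
  then have "v \<in> {w \<in> V. E u w}" using Ein by auto
  moreover have "finite {w \<in> V. E u w}" using finV' by simp
  ultimately show ?thesis unfolding Defs.degree_def by (metis card_gt_0_iff empty_iff)
qed

lemma nlap_diag: "nlap V E u u = 1"
  by (simp add: nlap_def Eirr)

lemma nlap_non: "u \<noteq> v \<Longrightarrow> \<not> E u v \<Longrightarrow> nlap V E u v = 0"
  by (simp add: nlap_def)

lemma nlap_adj: "E u v \<Longrightarrow> nlap V E u v = - 1 / sqrt (real (Defs.degree V E u) * real (Defs.degree V E v))"
  using Eneq by (simp add: nlap_def)

lemma nlap_neg: "E u v \<Longrightarrow> nlap V E u v < 0"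
proof -
  assume e: "E u v"
  have "Defs.degree V E u > 0" "Defs.degree V E v > 0" using e degree_pos Esym by blast+
  then have "sqrt (real (Defs.degree V E u) * real (Defs.degree V E v)) > 0" by simp
  then show ?thesis using nlap_adj[OF e] by simp
qed

lemma nlap_le0: "u \<noteq> v \<Longrightarrow> nlap V E u v \<le> 0"
  using nlap_neg nlap_non by (cases "E u v") (auto intro: less_imp_le)

definition near2 :: "'a \<Rightarrow> 'a \<Rightarrow> bool" where
  "near2 u w \<longleftrightarrow> u = w \<or> E u w \<or> (\<exists>v. E u v \<and> E v w)"

lemma Tr_delta: "y \<in> V \<Longrightarrow> Tr (\<lambda>z. if z = y then 1 else 0) u = nlap V E u y"
  by (simp add: Tr_def if_distrib cong: if_cong) (simp add: finV')

lemma dist3_neg: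
  assumes uV: "u \<in> V" and yV: "y \<in> V" and ua: "E u a" and ab: "E a b" and by': "E b y"
    and far: "\<not> near2 u y"
  shows "qopr [r1, r2, r3] (\<lambda>z. if z = y then 1 else 0) u < 0"
proof -
  define e where "e = (\<lambda>z. if z = y then 1 else (0::real))"
  define f1 where "f1 = shr r3 e"
  define f2 where "f2 = shr r2 f1"
  have f1v: "f1 z = nlap V E z y - r3 * e z" for z
    by (simp add: f1_def shr_def e_def Tr_delta[OF yV])
  have f1_0: "z \<noteq> y \<Longrightarrow> \<not> E z y \<Longrightarrow> f1 z = 0" for z
    by (simp add: f1v e_def nlap_non)
  have f1_le: "z \<noteq> y \<Longrightarrow> f1 z \<le> 0" for z
    by (simp add: f1v e_def nlap_le0)
  have f1_lt: "E z y \<Longrightarrow> f1 z < 0" for z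
    using Eneq by (simp add: f1v e_def nlap_neg)
  have f2_nonneg: "v \<noteq> y \<Longrightarrow> \<not> E v y \<Longrightarrow> f2 v = Tr f1 v \<and> 0 \<le> f2 v" for v
  proof -
    assume h: "v \<noteq> y" "\<not> E v y"
    have "f2 v = Tr f1 v" by (simp add: f2_def shr_def f1_0[OF h])
    moreover have "0 \<le> Tr f1 v" unfolding Tr_def
    proof (rule sum_nonneg)
      fix w assume "w \<in> V"
      show "0 \<le> nlap V E v w * f1 w"
      proof (cases "w = v")
        case True then show ?thesis by (simp add: f1_0[OF h])
      next
        case False
        show ?thesis
        proof (cases "E v w")
          case True
          then have "w \<noteq> y" using h by blast
          then show ?thesis using nlap_neg[OF True] f1_le
            by (simp add: mult_nonpos_nonpos less_imp_le)
        next
          case False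
          then show ?thesis using \<open>w \<noteq> v\<close> by (simp add: nlap_non)
        qed
      qed
    qed
    ultimately show ?thesis by simp
  qed
  have ay: "a \<noteq> y" "\<not> E a y" using far ua unfolding near2_def by blast+
  have f2a: "0 < f2 a"
  proof -
    have "f2 a = Tr f1 a" using f2_nonneg[OF ay] by simp
    also have "0 < Tr f1 a" unfolding Tr_def
    proof (rule sum_pos2[of V b])
      show "finite V" by (rule finV')
      show "b \<in> V" using ab Ein by blast
      show "0 < nlap V E a b * f1 b" using nlap_neg[OF ab] f1_lt[OF by']
        by (simp add: mult_neg_neg)
      fix w assume "w \<in> V"
      show "0 \<le> nlap V E a w * f1 w"
      proof (cases "w = a")
        case True then show ?thesis by (simp add: f1_0[OF ay])
      next
        case False
        show ?thesis
        proof (cases "E a w")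
          case True
          then have "w \<noteq> y" using ay by blast
          then show ?thesis using nlap_neg[OF True] f1_le
            by (simp add: mult_nonpos_nonpos less_imp_le)
        next
          case False
          then show ?thesis using \<open>w \<noteq> a\<close> by (simp add: nlap_non)
        qed
      qed
    qed
    finally show ?thesis .
  qed
  have uy: "u \<noteq> y" "\<not> E u y" using far unfolding near2_def by blast+
  have f2u: "f2 u = 0"
  proof -
    have "f2 u = Tr f1 u" using f2_nonneg[OF uy] by simp
    also have "\<dots> = 0" unfolding Tr_def
    proof (rule sum.neutral, rule ballI)
      fix w assume "w \<in> V"
      show "nlap V E u w * f1 w = 0"
      proof (cases "w = u")
        case True then show ?thesis by (simp add: f1_0[OF uy])
      next
        case False
        show ?thesis
        proof (cases "E u w")
          case True
          then have "w \<noteq> y" "\<not> E w y" using far unfolding near2_def by blast+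
          then show ?thesis by (simp add: f1_0)
        next
          case False
          then show ?thesis using \<open>w \<noteq> u\<close> by (simp add: nlap_non)
        qed
      qed
    qed
    finally show ?thesis .
  qed
  have q2: "qopr [r2, r3] e = f2" by (simp add: f2_def f1_def)
  have "qopr [r1, r2, r3] e u = shr r1 f2 u" by (simp add: q2[symmetric])
  also have "\<dots> = Tr f2 u" by (simp add: shr_def f2u)
  also have "Tr f2 u < 0"
  proof -
    have "0 < (\<Sum>v\<in>V. - (nlap V E u v * f2 v))"
    proof (rule sum_pos2[of V a])
      show "finite V" by (rule finV')
      show "a \<in> V" using ua Ein by blast
      show "0 < - (nlap V E u a * f2 a)" using nlap_neg[OF ua] f2a
        by (simp add: mult_neg_pos)
      fix v assume "v \<in> V"
      show "0 \<le> - (nlap V E u v * f2 v)"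
      proof (cases "v = u")
        case True then show ?thesis by (simp add: f2u)
      next
        case False
        show ?thesis
        proof (cases "E u v")
          case True
          then have "v \<noteq> y" "\<not> E v y" using far unfolding near2_def by blast+
          then have "0 \<le> f2 v" using f2_nonneg by blast
          then show ?thesis using nlap_neg[OF True]
            by (simp add: mult_nonpos_nonneg less_imp_le)
        next
          case False
          then show ?thesis using \<open>v \<noteq> u\<close> by (simp add: nlap_non)
        qed
      qed
    qed
    then show ?thesis by (simp add: Tr_def sum_negf)
  qed
  finally show ?thesis by (simp add: e_def)
qed

lemma path_near:
  assumes "E\<^sup>*\<^sup>* u w"
  shows "near2 u w \<or> (\<exists>y a b. E u a \<and> E a b \<and> E b y \<and> \<not> near2 u y)"
  using assms
proof (induction rule: rtranclp_induct)
  case base then show ?case by (simp add: near2_def)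
next
  case (step w w')
  show ?case
  proof (cases "near2 u w")
    case False then show ?thesis using step by blast
  next
    case True
    show ?thesis
    proof (cases "near2 u w'")
      case True then show ?thesis by blast
    next
      case False
      from \<open>near2 u w\<close> have "u = w \<or> E u w \<or> (\<exists>v. E u v \<and> E v w)" by (simp add: near2_def)
      then show ?thesis
      proof (elim disjE exE conjE)
        assume "u = w" then show ?thesis using step False by (auto simp: near2_def)
      next
        assume "E u w" then show ?thesis using step False by (auto simp: near2_def)
      next
        fix v assume "E u v" "E v w" then show ?thesis using step False by blast
      qed
    qed
  qed
qed

theorem diam2:
  assumes conn: "connected_graph V E"
    and eigs: "\<And>\<mu>. nlap_eigenvalue V E \<mu> \<Longrightarrow> \<mu> \<in> set [r1, r2, r3]"
    and uV: "u \<in> V" and wV: "w \<in> V"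
  shows "near2 u w"
proof (rule ccontr)
  assume nn: "\<not> near2 u w"
  have "E\<^sup>*\<^sup>* u w" using conn uV wV by (simp add: connected_graph_def)
  with nn obtain y a b where p: "E u a" "E a b" "E b y" "\<not> near2 u y"
    using path_near by blast
  have yV: "y \<in> V" using p Ein by blast
  have "qopr [r1, r2, r3] (\<lambda>z. if z = y then 1 else 0) u < 0"
    by (rule dist3_neg[OF uV yV p])
  moreover have "qopr [r1, r2, r3] (\<lambda>z. if z = y then 1 else 0) u = 0"
    by (rule annihilate_real[OF _ uV]) (use eigs eig_iff in blast)
  ultimately show False by simp
qed

end


context ugraph
begin

lemma cyc4:
  assumes V: "V = {a0, a1, a2, a3}" and d: "distinct [a0, a1, a2, a3]"
    and e: "E a0 a1" "E a1 a2" "E a2 a3" "E a3 a0" and ne: "\<not> E a0 a2" "\<not> E a1 a3"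
  shows "is_cycle_graph V E 4"
proof -
  define f where "f v = (if v = a0 then 0 else if v = a1 then 1 else if v = a2 then 2 else (3::nat))" for v
  have "bij_betw f V {..<4}"
  proof (rule bij_betw_imageI)
    show "inj_on f V" using d unfolding V f_def by (auto simp: inj_on_def)
    show "f ` V = {..<4}" using d unfolding V f_def by (auto simp: lessThan_nat_numeral)
  qed
  moreover have "\<forall>u\<in>V. \<forall>v\<in>V. E u v \<longleftrightarrow> ((f u + 1) mod 4 = f v \<or> (f v + 1) mod 4 = f u)"
    using d e ne Esym Eirr unfolding V f_def by auto
  ultimately show ?thesis unfolding is_cycle_graph_def by blast
qed

lemma cyc5:
  assumes V: "V = {a0, a1, a2, a3, a4}" and d: "distinct [a0, a1, a2, a3, a4]"
    and e: "E a0 a1" "E a1 a2" "E a2 a3" "E a3 a4" "E a4 a0"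
    and ne: "\<not> E a0 a2" "\<not> E a0 a3" "\<not> E a1 a3" "\<not> E a1 a4" "\<not> E a2 a4"
  shows "is_cycle_graph V E 5"
proof -
  define f where "f v = (if v = a0 then 0 else if v = a1 then 1 else if v = a2 then 2 else if v = a3 then 3 else (4::nat))" for v
  have "bij_betw f V {..<5}"
  proof (rule bij_betw_imageI)
    show "inj_on f V" using d unfolding V f_def by (auto simp: inj_on_def)
    show "f ` V = {..<5}" using d unfolding V f_def by (auto simp: lessThan_nat_numeral)
  qed
  moreover have "\<forall>u\<in>V. \<forall>v\<in>V. E u v \<longleftrightarrow> ((f u + 1) mod 5 = f v \<or> (f v + 1) mod 5 = f u)"
    using d e ne Esym Eirr unfolding V f_def by auto
  ultimately show ?thesis unfolding is_cycle_graph_def by blast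
qed

theorem classify:
  assumes conn: "connected_graph V E" and cardE: "card (graph_edges E) = card V"
    and d2o: "\<forall>u\<in>V. \<forall>w\<in>V. near2 u w"
  shows "(\<exists>c p q. V = {c, p, q} \<and> distinct [c, p, q] \<and> E c p \<and> E c q \<and> E p q)
    \<or> (\<exists>c p q t. c \<in> V \<and> p \<in> V \<and> q \<in> V \<and> t \<in> V \<and> distinct [c, p, q, t]
          \<and> nbr V E t = {c} \<and> nbr V E p = {c, q} \<and> nbr V E q = {c, p})
    \<or> is_cycle_graph V E 4 \<or> is_cycle_graph V E 5"
proof -
  have d2: "near2 u w" if "u \<in> V" "w \<in> V" for u w using d2o that by blast
  define N where "N = nbr V E"
  have finN: "finite (N u)" for u using finV' by (simp add: N_def nbr_def)
  have inN: "v \<in> N u \<longleftrightarrow> E u v" for u v using Ein by (auto simp: N_def nbr_def)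
  have Vne: "V \<noteq> {}" using conn by (simp add: connected_graph_def)
  define m where "m = Max ((\<lambda>u. card (N u)) ` V)"
  have "m \<in> (\<lambda>u. card (N u)) ` V" unfolding m_def using finV' Vne by (intro Max_in) auto
  then obtain c where cV: "c \<in> V" and cm: "card (N c) = m" by auto
  have cmax: "u \<in> V \<Longrightarrow> card (N u) \<le> card (N c)" for u
    unfolding cm m_def using finV' by (intro Max_ge) auto
  have cN: "c \<notin> N c" using inN Eirr by blast
  have NV: "b \<in> N c \<Longrightarrow> b \<in> V" for b using inN Ein by blast
  define R where "R = V - insert c (N c)"
  have inR: "r \<in> R \<longleftrightarrow> r \<in> V \<and> r \<noteq> c \<and> r \<notin> N c" for r by (auto simp: R_def)
  have xex: "\<exists>a. E r a \<and> E a c" if "r \<in> R" for r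
  proof -
    have "near2 r c" using d2 that cV by (simp add: inR)
    moreover have "r \<noteq> c" "\<not> E r c" using that inN Esym by (auto simp: inR)
    ultimately show ?thesis by (auto simp: near2_def)
  qed
  define x where "x r = (SOME a. E r a \<and> E a c)" for r
  have xE: "r \<in> R \<Longrightarrow> E r (x r)" for r using someI_ex[OF xex] by (simp add: x_def)
  have xN: "r \<in> R \<Longrightarrow> x r \<in> N c" for r using someI_ex[OF xex] inN Esym by (simp add: x_def)
  define g where "g v = (if v \<in> N c then {c, v} else {v, x v})" for v
  have ginj: "inj_on g (V - {c})"
  proof (rule inj_onI)
    fix v w assume v: "v \<in> V - {c}" and w: "w \<in> V - {c}" and eq: "g v = g w"
    show "v = w"
    proof (cases "v \<in> N c")
      case vN: True
      show ?thesis
      proof (cases "w \<in> N c")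
        case True then show ?thesis using eq vN v w by (auto simp: g_def doubleton_eq_iff)
      next
        case False
        then have "w \<in> R" using w by (simp add: inR)
        then show ?thesis using eq vN False v w xN cN by (auto simp: g_def doubleton_eq_iff)
      qed
    next
      case vN: False
      then have vR: "v \<in> R" using v by (simp add: inR)
      show ?thesis
      proof (cases "w \<in> N c")
        case True then show ?thesis using eq vN vR v w xN cN by (auto simp: g_def doubleton_eq_iff)
      next
        case False
        then have "w \<in> R" using w by (simp add: inR)
        then show ?thesis using eq vN False vR v w xN by (auto simp: g_def doubleton_eq_iff)
      qed
    qed
  qed
  define Im where "Im = g ` (V - {c})"
  have ImG: "Im \<subseteq> graph_edges E"
  proof
    fix e assume "e \<in> Im"
    then obtain v where v: "v \<in> V - {c}" "e = g v" by (auto simp: Im_def)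
    show "e \<in> graph_edges E"
    proof (cases "v \<in> N c")
      case True then show ?thesis using v inN by (auto simp: g_def graph_edges_def)
    next
      case False
      then have "v \<in> R" using v by (simp add: inR)
      then show ?thesis using v xE False by (auto simp: g_def graph_edges_def)
    qed
  qed
  have finG: "finite (graph_edges E)"
  proof (rule finite_subset)
    show "graph_edges E \<subseteq> Pow V" using Ein by (auto simp: graph_edges_def)
    show "finite (Pow V)" using finV' by simp
  qed
  have cardIm: "card Im = card V - 1"
    unfolding Im_def using card_image[OF ginj] cV finV' by simp
  have "card (graph_edges E - Im) = 1"
  proof -
    have "card V > 0" using cV finV' card_gt_0_iff by blast
    then show ?thesis
      using card_Diff_subset[OF finite_subset[OF ImG finG] ImG] cardE cardIm by simp
  qed
  then obtain e0 where e0: "graph_edges E - Im = {e0}" by (rule card_1_singletonE)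
  then have "e0 \<in> graph_edges E" by auto
  then obtain p q where pq: "e0 = {p, q}" "E p q" unfolding graph_edges_def by blast
  have e0Im: "e0 \<notin> Im" using e0 by auto
  have EDGE: "E u v \<Longrightarrow> {u, v} \<in> Im \<or> {u, v} = e0" for u v
  proof -
    assume "E u v"
    then have "{u, v} \<in> graph_edges E" unfolding graph_edges_def by blast
    then show ?thesis using e0 by (metis DiffI singletonD)
  qed
  have ImE: "(\<exists>w\<in>N c. {u, v} = {c, w}) \<or> (\<exists>w\<in>R. {u, v} = {w, x w})" if H: "{u, v} \<in> Im" for u v
  proof -
    obtain w where w: "{u, v} = g w" "w \<in> V - {c}" using H unfolding Im_def by (rule imageE)
    show ?thesis
    proof (cases "w \<in> N c")
      case True then show ?thesis using w by (intro disjI1 bexI[of _ w]) (simp_all add: g_def)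
    next
      case False
      then have "w \<in> R" using w by (simp add: inR)
      then show ?thesis using w False by (intro disjI2 bexI[of _ w]) (simp_all add: g_def)
    qed
  qed
  have gN: "w \<in> N c \<Longrightarrow> {c, w} \<in> Im" for w unfolding Im_def g_def using NV cN
    by (intro image_eqI[of _ _ w]) auto
  have gR: "w \<in> R \<Longrightarrow> {w, x w} \<in> Im" for w unfolding Im_def g_def
    by (intro image_eqI[of _ _ w]) (auto simp: inR)
  have pnq: "p \<noteq> q" using pq Eneq by blast
  have pV: "p \<in> V" and qV: "q \<in> V" using pq Ein by auto
  have cp: "p \<noteq> c"
  proof
    assume "p = c"
    then have "q \<in> N c" using pq inN by simp
    then have "{c, q} \<in> Im" by (rule gN)
    then show False using e0Im pq \<open>p = c\<close> by simp
  qed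
  have cq: "q \<noteq> c"
  proof
    assume "q = c"
    then have "p \<in> N c" using pq inN Esym by blast
    then have "{c, p} \<in> Im" by (rule gN)
    then show False using e0Im pq \<open>q = c\<close> by (simp add: insert_commute)
  qed
  have Rn: "r \<in> R \<Longrightarrow> r \<notin> e0 \<Longrightarrow> E r v \<Longrightarrow> v = x r" for r v
  proof -
    assume r: "r \<in> R" "r \<notin> e0" and e: "E r v"
    have "{r, v} \<noteq> e0" using r by auto
    then have "{r, v} \<in> Im" using EDGE[OF e] by blast
    from ImE[OF this] show "v = x r"
    proof
      assume "\<exists>w\<in>N c. {r, v} = {c, w}"
      then show ?thesis using r by (auto simp: doubleton_eq_iff inR)
    next
      assume "\<exists>w\<in>R. {r, v} = {w, x w}"
      then obtain w where w: "w \<in> R" "{r, v} = {w, x w}" by blast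
      then show ?thesis using xN[OF w(1)] r by (auto simp: doubleton_eq_iff inR)
    qed
  qed
  have Nint: "b \<in> N c \<Longrightarrow> b' \<in> N c \<Longrightarrow> E b b' \<Longrightarrow> {b, b'} = e0" for b b'
  proof -
    assume b: "b \<in> N c" "b' \<in> N c" and e: "E b b'"
    show ?thesis
    proof (rule ccontr)
      assume "{b, b'} \<noteq> e0"
      then have "{b, b'} \<in> Im" using EDGE[OF e] by blast
      from ImE[OF this] show False
      proof
        assume "\<exists>w\<in>N c. {b, b'} = {c, w}"
        then show False using b cN by (auto simp: doubleton_eq_iff)
      next
        assume "\<exists>w\<in>R. {b, b'} = {w, x w}"
        then show False using b by (auto simp: doubleton_eq_iff inR)
      qed
    qed
  qed
  have Nn: "b \<in> N c \<Longrightarrow> b \<notin> e0 \<Longrightarrow> E b v \<Longrightarrow> v = c \<or> (v \<in> R \<and> b = x v)" for b v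
  proof -
    assume b: "b \<in> N c" "b \<notin> e0" and e: "E b v"
    have "{b, v} \<noteq> e0" using b by auto
    then have "{b, v} \<in> Im" using EDGE[OF e] by blast
    from ImE[OF this] show ?thesis
    proof
      assume "\<exists>w\<in>N c. {b, v} = {c, w}"
      then show ?thesis using b cN by (auto simp: doubleton_eq_iff)
    next
      assume "\<exists>w\<in>R. {b, v} = {w, x w}"
      then show ?thesis using b by (auto simp: doubleton_eq_iff inR)
    qed
  qed
  have Vsplit: "v \<in> V \<Longrightarrow> v = c \<or> v \<in> N c \<or> v \<in> R" for v by (auto simp: inR)
  have pR: "p \<in> N c \<or> p \<in> R" using Vsplit[OF pV] cp by blast
  have qR: "q \<in> N c \<or> q \<in> R" using Vsplit[OF qV] cq by blast

  have Rn': "r \<in> R \<Longrightarrow> E r v \<Longrightarrow> {r, v} \<noteq> e0 \<Longrightarrow> v = x r" for r v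
  proof -
    assume r: "r \<in> R" and e: "E r v" and ne: "{r, v} \<noteq> e0"
    then have "{r, v} \<in> Im" using EDGE[OF e] by simp
    from ImE[OF this] show "v = x r"
    proof
      assume "\<exists>w\<in>N c. {r, v} = {c, w}"
      then show ?thesis using r by (auto simp: doubleton_eq_iff inR)
    next
      assume "\<exists>w\<in>R. {r, v} = {w, x w}"
      then obtain w where w: "w \<in> R" and ww: "{r, v} = {w, x w}" by (rule bexE)
      then show ?thesis using xN[OF w] r by (auto simp: doubleton_eq_iff inR)
    qed
  qed
  have caseI: ?thesis if pN: "p \<in> N c" and qN: "q \<in> N c"
  proof -
    have Rempty: "R = {}"
    proof (rule ccontr)
      assume "R \<noteq> {}"
      then obtain r where r: "r \<in> R" by auto
      have re0: "r \<notin> e0" using r pN qN pq(1) by (auto simp: inR)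
      define a where "a = x r"
      have aN: "a \<in> N c" using xN[OF r] a_def by simp
      have ra: "E r a" using xE[OF r] a_def by simp
      have nb: "b = a \<or> {a, b} = e0" if b: "b \<in> N c" for b
      proof (rule ccontr)
        assume h: "\<not> (b = a \<or> {a, b} = e0)"
        have "near2 r b" using d2 r NV[OF b] by (simp add: inR)
        moreover have "r \<noteq> b" using r b by (auto simp: inR)
        moreover have "\<not> E r b" using Rn[OF r re0] h a_def by blast
        ultimately obtain v where v: "E r v" "E v b" by (auto simp: near2_def)
        then have "v = a" using Rn[OF r re0] a_def by blast
        then have "{a, b} = e0" using Nint[OF aN b] v by simp
        then show False using h by simp
      qed
      have aPQ: "a = p \<or> a = q"
        using nb[OF pN] pnq by (auto simp: pq(1) doubleton_eq_iff)
      have Nsub: "N c \<subseteq> {p, q}"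
      proof
        fix b assume b: "b \<in> N c"
        show "b \<in> {p, q}" using nb[OF b] aPQ by (auto simp: pq(1) doubleton_eq_iff)
      qed
      have "card (N c) \<le> card {p, q}" by (rule card_mono) (use Nsub in auto)
      then have c2: "card (N c) \<le> 2" using pnq by simp
      define ot where "ot = (if a = p then q else p)"
      have oN: "ot \<in> N c" using pN qN by (simp add: ot_def)
      have ao: "E a ot" using pq(2) Esym aPQ pnq by (auto simp: ot_def)
      have sub: "{c, r, ot} \<subseteq> N a"
        using aN ra ao inN Esym by auto
      have dist: "c \<noteq> r" "c \<noteq> ot" "r \<noteq> ot" using r oN cN by (auto simp: inR)
      have "card {c, r, ot} = 3" using dist by simp
      moreover have "card {c, r, ot} \<le> card (N a)" using card_mono[OF finN sub] .
      moreover have "card (N a) \<le> card (N c)" using cmax NV[OF aN] by blast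
      ultimately show False using c2 by simp
    qed
    have VN: "V = insert c (N c)"
    proof
      show "V \<subseteq> insert c (N c)" using Vsplit Rempty by auto
      show "insert c (N c) \<subseteq> V" using cV NV by auto
    qed
    show ?thesis
    proof (cases "N c = {p, q}")
      case True
      have "V = {c, p, q}" using VN True by simp
      moreover have "distinct [c, p, q]" using cp cq pnq by auto
      moreover have "E c p" "E c q" using pN qN inN by auto
      ultimately show ?thesis using pq(2)
        by (intro disjI1 exI[of _ c] exI[of _ p] exI[of _ q]) simp
    next
      case False
      then obtain t where t: "t \<in> N c" "t \<noteq> p" "t \<noteq> q" using pN qN by blast
      have te0: "t \<notin> e0" using t pq(1) by simp
      have Nt: "nbr V E t = {c}"
      proof -
        have "v \<in> N t \<longleftrightarrow> v = c" for v
        proof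
          assume "v \<in> N t"
          then have "E t v" using inN by simp
          then show "v = c" using Nn[OF t(1) te0] Rempty by blast
        next
          assume "v = c"
          then show "v \<in> N t" using t(1) inN Esym by blast
        qed
        then show ?thesis unfolding N_def[symmetric] by (intro set_eqI) simp
      qed
      have np: "E p v \<Longrightarrow> v = c \<or> v = q" for v
      proof -
        assume e: "E p v"
        show ?thesis
        proof (cases "{p, v} = e0")
          case True then show ?thesis using pq(1) pnq by (auto simp: doubleton_eq_iff)
        next
          case False
          then have "{p, v} \<in> Im" using EDGE[OF e] by simp
          from ImE[OF this] show ?thesis
          proof
            assume "\<exists>w\<in>N c. {p, v} = {c, w}"
            then show ?thesis using cp by (auto simp: doubleton_eq_iff)
          next
            assume "\<exists>w\<in>R. {p, v} = {w, x w}"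
            then show ?thesis using Rempty by simp
          qed
        qed
      qed
      have nq: "E q v \<Longrightarrow> v = c \<or> v = p" for v
      proof -
        assume e: "E q v"
        show ?thesis
        proof (cases "{q, v} = e0")
          case True then show ?thesis using pq(1) pnq by (auto simp: doubleton_eq_iff)
        next
          case False
          then have "{q, v} \<in> Im" using EDGE[OF e] by simp
          from ImE[OF this] show ?thesis
          proof
            assume "\<exists>w\<in>N c. {q, v} = {c, w}"
            then show ?thesis using cq by (auto simp: doubleton_eq_iff)
          next
            assume "\<exists>w\<in>R. {q, v} = {w, x w}"
            then show ?thesis using Rempty by simp
          qed
        qed
      qed
      have Np: "nbr V E p = {c, q}"
      proof -
        have "v \<in> N p \<longleftrightarrow> v = c \<or> v = q" for v
          using np inN pN qN pq(2) Esym by blast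
        then show ?thesis unfolding N_def[symmetric] by (intro set_eqI) simp
      qed
      have Nq: "nbr V E q = {c, p}"
      proof -
        have "v \<in> N q \<longleftrightarrow> v = c \<or> v = p" for v
          using nq inN pN qN pq(2) Esym by blast
        then show ?thesis unfolding N_def[symmetric] by (intro set_eqI) simp
      qed
      have "distinct [c, p, q, t]" using cp cq pnq t cN by auto
      moreover have "t \<in> V" using NV[OF t(1)] .
      ultimately show ?thesis using Nt Np Nq cV pV qV
        by (intro disjI2 disjI1 exI[of _ c] exI[of _ p] exI[of _ q] exI[of _ t]) simp
    qed
  qed

  have case2: ?thesis if A: "e0 = {p', q'}" "p' \<in> N c" "q' \<in> R" for p' q'
  proof -
    have Epq': "E p' q'" using A(1) pq Esym by (auto simp: doubleton_eq_iff)
    define a where "a = x q'"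
    have aN: "a \<in> N c" and qa: "E q' a" using xN xE A(3) a_def by auto
    have ap: "a \<noteq> p'"
    proof
      assume "a = p'"
      then have "{q', x q'} = e0" using A(1) a_def by (simp add: insert_commute)
      then show False using gR[OF A(3)] e0Im by simp
    qed
    have noint: "\<not> E b b'" if b: "b \<in> N c" "b' \<in> N c" for b b'
    proof
      assume "E b b'"
      then have "{b, b'} = {p', q'}" using Nint b A(1) by simp
      then have "q' \<in> N c" using b by (auto simp: doubleton_eq_iff)
      then show False using A(3) by (simp add: inR)
    qed
    have nq: "v = a \<or> v = p'" if e: "E q' v" for v
    proof (cases "{q', v} = e0")
      case True then show ?thesis using A(1) Eneq[OF e] by (auto simp: doubleton_eq_iff)
    next
      case False
      then show ?thesis using Rn'[OF A(3) e] a_def by simp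
    qed
    have Rq: "R = {q'}"
    proof (rule ccontr)
      assume "R \<noteq> {q'}"
      then obtain r where r: "r \<in> R" "r \<noteq> q'" using A(3) by blast
      have re0: "r \<notin> e0" using r A by (auto simp: inR)
      obtain b where b: "b \<in> N c" "b \<noteq> x r" using aN A(2) ap by metis
      have "near2 r b" using d2 r(1) NV[OF b(1)] by (simp add: inR)
      moreover have "r \<noteq> b" using r b by (auto simp: inR)
      moreover have "\<not> E r b" using Rn[OF r(1) re0] b by blast
      ultimately obtain v where v: "E r v" "E v b" by (auto simp: near2_def)
      then have "v = x r" using Rn[OF r(1) re0] by blast
      then show False using noint[OF xN[OF r(1)] b(1)] v by simp
    qed
    have Nc: "N c = {p', a}"
    proof
      show "{p', a} \<subseteq> N c" using A(2) aN by simp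
      show "N c \<subseteq> {p', a}"
      proof
        fix b assume b: "b \<in> N c"
        show "b \<in> {p', a}"
        proof (rule ccontr)
          assume nb: "b \<notin> {p', a}"
          have "near2 q' b" using d2 A(3) NV[OF b] by (simp add: inR)
          moreover have "q' \<noteq> b" using A(3) b by (auto simp: inR)
          moreover have "\<not> E q' b" using nq nb by blast
          ultimately obtain v where v: "E q' v" "E v b" by (auto simp: near2_def)
          then have "v \<in> N c" using nq[OF v(1)] aN A(2) by blast
          then show False using noint[OF _ b] v by blast
        qed
      qed
    qed
    have V4: "V = {c, p', q', a}"
    proof
      show "V \<subseteq> {c, p', q', a}" using Vsplit Rq Nc by auto
      show "{c, p', q', a} \<subseteq> V" using cV NV A(2) aN A(3) by (auto simp: inR)
    qed
    have "is_cycle_graph V E 4"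
    proof (rule cyc4[OF V4])
      show "distinct [c, p', q', a]" using cN A aN ap Eneq[OF Epq'] Eneq[OF qa] by (auto simp: inR)
      show "E c p'" "E p' q'" "E q' a" "E a c" using A(2) Epq' qa aN inN Esym by auto
      show "\<not> E c q'" using A(3) inN by (simp add: inR)
      show "\<not> E p' a" using noint A(2) aN by blast
    qed
    then show ?thesis by simp
  qed
  have case3: ?thesis if pR: "p \<in> R" and qR: "q \<in> R"
  proof -
    have noint: "\<not> E b b'" if b: "b \<in> N c" "b' \<in> N c" for b b'
    proof
      assume "E b b'"
      then have "{b, b'} = {p, q}" using Nint b pq(1) by simp
      then have "p \<in> N c" using b by (auto simp: doubleton_eq_iff)
      then show False using pR by (simp add: inR)
    qed
    have np: "v = x p \<or> v = q" if e: "E p v" for v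
    proof (cases "{p, v} = e0")
      case True then show ?thesis using pq(1) Eneq[OF e] by (auto simp: doubleton_eq_iff)
    next
      case False
      then show ?thesis using Rn'[OF pR e] by simp
    qed
    have nq: "v = x q \<or> v = p" if e: "E q v" for v
    proof (cases "{q, v} = e0")
      case True then show ?thesis using pq(1) Eneq[OF e] by (auto simp: doubleton_eq_iff)
    next
      case False
      then show ?thesis using Rn'[OF qR e] by simp
    qed
    have c2: "2 \<le> card (N c)"
    proof -
      have "{c, p} \<subseteq> N (x p)" using xN[OF pR] xE[OF pR] inN Esym by auto
      then have "card {c, p} \<le> card (N (x p))" by (rule card_mono[OF finN])
      moreover have "card {c, p} = 2" using cp by simp
      moreover have "card (N (x p)) \<le> card (N c)" using cmax NV xN pR by blast
      ultimately show ?thesis by simp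
    qed
    have other: "\<exists>b\<in>N c. b \<noteq> y" for y
    proof (rule ccontr)
      assume "\<not> (\<exists>b\<in>N c. b \<noteq> y)"
      then have "N c \<subseteq> {y}" by auto
      then have "card (N c) \<le> card {y}" by (rule card_mono[rotated]) simp
      then show False using c2 by simp
    qed
    have Rpq: "R = {p, q}"
    proof
      show "{p, q} \<subseteq> R" using pR qR by simp
      show "R \<subseteq> {p, q}"
      proof
        fix r assume r: "r \<in> R"
        show "r \<in> {p, q}"
        proof (rule ccontr)
          assume rn: "r \<notin> {p, q}"
          then have re0: "r \<notin> e0" using pq(1) by simp
          obtain b where b: "b \<in> N c" "b \<noteq> x r" using other by blast
          have "near2 r b" using d2 r NV[OF b(1)] by (simp add: inR)
          moreover have "r \<noteq> b" using r b by (auto simp: inR)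
          moreover have "\<not> E r b" using Rn[OF r re0] b by blast
          ultimately obtain v where v: "E r v" "E v b" by (auto simp: near2_def)
          then have "v = x r" using Rn[OF r re0] by blast
          then show False using noint[OF xN[OF r] b(1)] v by simp
        qed
      qed
    qed
    have Nc: "N c = {x p, x q}"
    proof
      show "{x p, x q} \<subseteq> N c" using xN pR qR by simp
      show "N c \<subseteq> {x p, x q}"
      proof
        fix b assume b: "b \<in> N c"
        show "b \<in> {x p, x q}"
        proof (rule ccontr)
          assume nb: "b \<notin> {x p, x q}"
          have qN: "q \<notin> N c" "p \<notin> N c" using pR qR by (auto simp: inR)
          have "near2 p b" using d2 pR NV[OF b] by (simp add: inR)
          moreover have "p \<noteq> b" using pR b by (auto simp: inR)
          moreover have "\<not> E p b" using np nb b qN by blast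
          ultimately obtain v where v: "E p v" "E v b" by (auto simp: near2_def)
          from np[OF v(1)] show False
          proof
            assume "v = x p"
            then show False using noint[OF xN[OF pR] b] v by simp
          next
            assume "v = q"
            then have "E q b" using v by simp
            then show False using nq nb b qN by blast
          qed
        qed
      qed
    qed
    have xpq: "x p \<noteq> x q"
    proof
      assume "x p = x q"
      then have "N c = {x p}" using Nc by simp
      then show False using c2 by simp
    qed
    have V5: "V = {c, x p, p, q, x q}"
    proof
      show "V \<subseteq> {c, x p, p, q, x q}" using Vsplit Rpq Nc by auto
      show "{c, x p, p, q, x q} \<subseteq> V" using cV NV xN pR qR by (auto simp: inR)
    qed
    have pNc: "p \<notin> N c" "q \<notin> N c" using pR qR by (auto simp: inR)
    have "is_cycle_graph V E 5"
    proof (rule cyc5[OF V5])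
      show "distinct [c, x p, p, q, x q]"
        using cN xN[OF pR] xN[OF qR] pNc xpq pnq cp cq by auto
      show "E c (x p)" "E (x p) p" "E p q" "E q (x q)" "E (x q) c"
        using xN xE pR qR pq(2) inN Esym by auto
      show "\<not> E c p" "\<not> E c q" using pNc inN by auto
      show "\<not> E (x p) (x q)" using noint xN pR qR by blast
      show "\<not> E (x p) q"
      proof
        assume "E (x p) q"
        then have "x p = x q \<or> x p = p" using nq Esym by blast
        then show False using xpq xN[OF pR] pNc by auto
      qed
      show "\<not> E p (x q)"
      proof
        assume "E p (x q)"
        then have "x q = x p \<or> x q = q" using np by blast
        then show False using xpq xN[OF qR] pNc by auto
      qed
    qed
    then show ?thesis by simp
  qed
  show ?thesis
  proof (cases "p \<in> N c")
    case pN: True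
    show ?thesis
    proof (cases "q \<in> N c")
      case True then show ?thesis using caseI pN by simp
    next
      case False then have "q \<in> R" using qR by simp
      then show ?thesis using case2[of p q] pq(1) pN by simp
    qed
  next
    case pN: False
    then have pR': "p \<in> R" using pR by simp
    show ?thesis
    proof (cases "q \<in> N c")
      case True then show ?thesis using case2[of q p] pR' pq(1) by (simp add: insert_commute)
    next
      case False then have "q \<in> R" using qR by simp
      then show ?thesis using case3 pR' by simp
    qed
  qed
qed

end


context ugraph
begin

lemma nbr_sub: "nbr V E u \<subseteq> V - {u}"
  using Eirr by (auto simp: nbr_def)

lemma deg_nbr: "Defs.degree V E u = card (nbr V E u)"
  by (simp add: Defs.degree_def nbr_def)

lemma fin_nbr: "finite (nbr V E u)"
  using finV' by (simp add: nbr_def)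

lemma Tr_nbr:
  assumes "u \<in> V"
  shows "Tr x u = x u + (\<Sum>v\<in>nbr V E u. nlap V E u v * x v)"
proof -
  have "Tr x u = nlap V E u u * x u + (\<Sum>v\<in>V - {u}. nlap V E u v * x v)"
    unfolding Tr_def using assms finV' by (simp add: sum.remove)
  also have "(\<Sum>v\<in>V - {u}. nlap V E u v * x v) = (\<Sum>v\<in>nbr V E u. nlap V E u v * x v)"
  proof (rule sum.mono_neutral_right)
    show "finite (V - {u})" using finV' by simp
    show "nbr V E u \<subseteq> V - {u}" by (rule nbr_sub)
    show "\<forall>v\<in>V - {u} - nbr V E u. nlap V E u v * x v = 0"
    proof
      fix v assume "v \<in> V - {u} - nbr V E u"
      then have "v \<noteq> u" "\<not> E u v" by (auto simp: nbr_def)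
      then show "nlap V E u v * x v = 0" by (simp add: nlap_non)
    qed
  qed
  finally show ?thesis by (simp add: nlap_diag)
qed

lemma nlap_val:
  assumes "E u v" "nbr V E u = A" "nbr V E v = B"
  shows "nlap V E u v = - 1 / sqrt (real (card A) * real (card B))"
  using nlap_adj[OF assms(1)] assms(2,3) by (simp add: deg_nbr)

lemma eig_Tr: "nlap_eigenvalue V E \<mu> \<longleftrightarrow> (\<exists>x. (\<exists>u\<in>V. x u \<noteq> 0) \<and> (\<forall>u\<in>V. Tr x u = \<mu> * x u))"
  by (simp add: nlap_eigenvalue_def Tr_def)

lemma zero_eig:
  assumes ab: "E a b"
  shows "nlap_eigenvalue V E 0"
proof -
  define x where "x v = sqrt (real (Defs.degree V E v))" for v
  have "\<forall>u\<in>V. Tr x u = 0 * x u"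
  proof
    fix u assume u: "u \<in> V"
    have trm: "nlap V E u v * x v = - 1 / sqrt (real (Defs.degree V E u))" if v: "v \<in> nbr V E u" for v
    proof -
      have e: "E u v" using v by (simp add: nbr_def)
      have dv: "Defs.degree V E v > 0" using degree_pos Esym[OF e] by blast
      have du: "Defs.degree V E u > 0" using degree_pos e by blast
      show ?thesis using dv du by (simp add: nlap_adj[OF e] x_def real_sqrt_mult field_simps)
    qed
    have "(\<Sum>v\<in>nbr V E u. nlap V E u v * x v) = - real (card (nbr V E u)) / sqrt (real (Defs.degree V E u))"
      by (simp add: trm)
    also have "\<dots> = - x u"
    proof (cases "Defs.degree V E u = 0")
      case True then show ?thesis by (simp add: x_def deg_nbr)
    next
      case False
      then have "sqrt (real (Defs.degree V E u)) > 0" by simp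
      then show ?thesis unfolding x_def deg_nbr[symmetric]
        by (simp add: field_simps)
    qed
    finally show "Tr x u = 0 * x u" using Tr_nbr[OF u] by simp
  qed
  moreover have "x a \<noteq> 0" using degree_pos[OF ab] by (simp add: x_def)
  moreover have "a \<in> V" using Ein ab by blast
  ultimately show ?thesis unfolding eig_Tr by blast
qed

lemma sqrt4: "sqrt 4 = 2"
  by (metis real_sqrt_abs abs_numeral power2_eq_square numeral_times_numeral num_double)

lemma Tr_supp2:
  assumes "a \<in> V" "b \<in> V" "a \<noteq> b" "\<And>v. v \<notin> {a, b} \<Longrightarrow> f v = 0"
  shows "Tr f z = nlap V E z a * f a + nlap V E z b * f b"
proof -
  have "Tr f z = (\<Sum>v\<in>{a, b}. nlap V E z v * f v)"
    unfolding Tr_def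
  proof (rule sum.mono_neutral_right)
    show "finite V" by (rule finV')
    show "{a, b} \<subseteq> V" using assms by simp
    show "\<forall>v\<in>V - {a, b}. nlap V E z v * f v = 0" using assms(4) by simp
  qed
  then show ?thesis using assms(3) by simp
qed

lemma c3_alg:
  fixes x0 x1 x2 \<mu> :: real
  assumes "x0 - x1 / 2 - x2 / 2 = \<mu> * x0" "x1 - x0 / 2 - x2 / 2 = \<mu> * x1" "x2 - x0 / 2 - x1 / 2 = \<mu> * x2"
    and "x0 \<noteq> 0 \<or> x1 \<noteq> 0 \<or> x2 \<noteq> 0"
  shows "\<mu> = 0 \<or> \<mu> = 3/2"
proof (rule ccontr)
  assume h: "\<not> (\<mu> = 0 \<or> \<mu> = 3/2)"
  define s where "s = x0 + x1 + x2"
  have "\<mu> * s = 0" using assms(1-3) by (simp add: s_def algebra_simps)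
  then have s0: "s = 0" using h by simp
  have "\<mu> * x0 = 3/2 * x0" using assms(1) s0 unfolding s_def by linarith
  then have a: "(3/2 - \<mu>) * x0 = 0" by (simp add: left_diff_distrib)
  have "\<mu> * x1 = 3/2 * x1" using assms(2) s0 unfolding s_def by linarith
  then have b: "(3/2 - \<mu>) * x1 = 0" by (simp add: left_diff_distrib)
  have "\<mu> * x2 = 3/2 * x2" using assms(3) s0 unfolding s_def by linarith
  then have c: "(3/2 - \<mu>) * x2 = 0" by (simp add: left_diff_distrib)
  have "3/2 - \<mu> \<noteq> 0" using h by simp
  then show False using a b c assms(4) by simp
qed

lemma c3_spec:
  assumes V: "V = {c, p, q}" and d: "distinct [c, p, q]" and e: "E c p" "E c q" "E p q"
  shows "{\<mu>. nlap_eigenvalue V E \<mu>} \<subseteq> {0, 3/2}"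
proof
  fix \<mu> assume "\<mu> \<in> {\<mu>. nlap_eigenvalue V E \<mu>}"
  then obtain x where x: "\<exists>u\<in>V. x u \<noteq> 0" "\<forall>u\<in>V. Tr x u = \<mu> * x u" by (auto simp: eig_Tr)
  have Nc: "nbr V E c = {p, q}" using V d e Eirr Esym by (auto simp: nbr_def)
  have Np: "nbr V E p = {c, q}" using V d e Eirr Esym by (auto simp: nbr_def)
  have Nq: "nbr V E q = {c, p}" using V d e Eirr Esym by (auto simp: nbr_def)
  have half: "nlap V E u v = - 1/2" if "E u v" "nbr V E u = A" "nbr V E v = B" "card A = 2" "card B = 2" for u v A B
    using nlap_val[OF that(1-3)] that(4,5) by (simp add: sqrt4)
  have cp: "nlap V E c p = -1/2" by (rule half[OF e(1) Nc Np]) (use d in auto)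
  have cq: "nlap V E c q = -1/2" by (rule half[OF e(2) Nc Nq]) (use d in auto)
  have pq: "nlap V E p q = -1/2" by (rule half[OF e(3) Np Nq]) (use d in auto)
  have pc: "nlap V E p c = -1/2" using cp nlap_sym by simp
  have qc: "nlap V E q c = -1/2" using cq nlap_sym by simp
  have qp: "nlap V E q p = -1/2" using pq nlap_sym by simp
  have "x c - x p / 2 - x q / 2 = \<mu> * x c"
    using x(2) Tr_nbr[of c x] V Nc d cp cq by simp
  moreover have "x p - x c / 2 - x q / 2 = \<mu> * x p"
    using x(2) Tr_nbr[of p x] V Np d pc pq by simp
  moreover have "x q - x c / 2 - x p / 2 = \<mu> * x q"
    using x(2) Tr_nbr[of q x] V Nq d qc qp by simp
  moreover have "x c \<noteq> 0 \<or> x p \<noteq> 0 \<or> x q \<noteq> 0" using x(1) V by auto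
  ultimately show "\<mu> \<in> {0, 3/2}" using c3_alg by blast
qed

lemma stare_false:
  assumes V: "c \<in> V" "p \<in> V" "q \<in> V" "t \<in> V" and dist: "distinct [c, p, q, t]"
    and Nt: "nbr V E t = {c}" and Np: "nbr V E p = {c, q}" and Nq: "nbr V E q = {c, p}"
    and card3: "card {\<mu>. nlap_eigenvalue V E \<mu>} = 3"
  shows False
proof -
  have Etc: "E t c" using Nt by (auto simp: nbr_def)
  have Epc: "E p c" "E p q" using Np by (auto simp: nbr_def)
  have Eqc: "E q c" using Nq by (auto simp: nbr_def)
  define d where "d = real (card (nbr V E c))"
  have "t \<in> nbr V E c" using Etc Esym V by (auto simp: nbr_def)
  then have dpos: "d > 0" using fin_nbr by (auto simp: d_def card_gt_0_iff)
  define a where "a = 1 / sqrt (2 * d)"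
  define b where "b = 1 / sqrt d"
  have apos: "a > 0" and bpos: "b > 0" using dpos by (simp_all add: a_def b_def)
  have ntc: "nlap V E t c = - b" using nlap_val[OF Etc Nt refl] by (simp add: d_def b_def)
  have npc: "nlap V E p c = - a" using nlap_val[OF Epc(1) Np refl] dist by (simp add: d_def a_def)
  have nqc: "nlap V E q c = - a" using nlap_val[OF Eqc Nq refl] dist by (simp add: d_def a_def)
  have npq: "nlap V E p q = - 1/2" using nlap_val[OF Epc(2) Np Nq] dist by (simp add: sqrt4)
  have npt: "nlap V E p t = 0" using dist Np V by (intro nlap_non) (auto simp: nbr_def)
  have nqt: "nlap V E q t = 0" using dist Nq V by (intro nlap_non) (auto simp: nbr_def)
  have e0: "nlap_eigenvalue V E 0" by (rule zero_eig[OF Etc])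
  have e32: "nlap_eigenvalue V E (3/2)"
  proof -
    define y where "y v = (if v = p then 1 else if v = q then -1 else (0::real))" for v
    have Ty: "Tr y u = nlap V E u p - nlap V E u q" for u
      using Tr_supp2[OF V(2) V(3), of y u] dist by (simp add: y_def)
    have "\<forall>u\<in>V. Tr y u = 3/2 * y u"
    proof
      fix u assume u: "u \<in> V"
      consider "u = p" | "u = q" | "u = c" | "u \<noteq> p" "u \<noteq> q" "u \<noteq> c" by blast
      then show "Tr y u = 3/2 * y u"
      proof cases
        case 1 then show ?thesis using dist by (simp add: Ty nlap_diag npq y_def)
      next
        case 2
        have "q \<noteq> p" using dist by auto
        then show ?thesis using 2 by (simp add: Ty nlap_diag npq nlap_sym[of q p] y_def)
      next
        case 3 then show ?thesis using dist by (simp add: Ty nlap_sym[of c p] nlap_sym[of c q] npc nqc y_def)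
      next
        case 4
        then have "\<not> E u p" "\<not> E u q" using Np Nq u Esym by (auto simp: nbr_def)
        then show ?thesis using 4 by (simp add: Ty nlap_non y_def)
      qed
    qed
    moreover have "y p \<noteq> 0" by (simp add: y_def)
    ultimately show ?thesis unfolding eig_Tr using V(2) by blast
  qed
  define S where "S = {\<mu>. nlap_eigenvalue V E \<mu>}"
  have fS: "finite S" using card3 card.infinite unfolding S_def by force
  have sub: "{0, 3/2} \<subseteq> S" using e0 e32 by (simp add: S_def)
  have "card (S - {0, 3/2}) = 1"
    using card_Diff_subset[OF _ sub] card3 by (simp add: S_def)
  then obtain r where r: "S - {0, 3/2} = {r}" by (rule card_1_singletonE)
  have eigs: "\<mu> \<in> set [0, 3/2, r]" if "eig \<mu>" for \<mu>
  proof -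
    have "\<mu> \<in> S" using that eig_iff by (simp add: S_def)
    moreover have "\<mu> \<in> S - {0, 3/2} \<Longrightarrow> \<mu> = r" by (simp add: r)
    ultimately show ?thesis by auto
  qed
  define e where "e = (\<lambda>z. if z = t then 1 else (0::real))"
  have ann: "qopr [0, 3/2, r] e u = 0" if "u \<in> V" for u
    by (rule annihilate_real[OF eigs that])
  define f1 where "f1 = shr r e"
  define f2 where "f2 = shr (3/2) f1"
  have qq: "qopr [0, 3/2, r] e = shr 0 f2" by (simp add: f2_def f1_def)
  have f1v: "f1 z = nlap V E z t - r * e z" for z
    by (simp add: f1_def shr_def e_def Tr_delta[OF V(4)])
  have f1t: "f1 t = 1 - r" by (simp add: f1v e_def nlap_diag)
  have f1c: "f1 c = - b" using dist by (simp add: f1v e_def nlap_sym[of c t] ntc)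
  have f1o: "f1 z = 0" if "z \<notin> {t, c}" for z
  proof -
    have "\<not> E z t" using that Nt Esym Ein by (auto simp: nbr_def)
    then show ?thesis using that by (simp add: f1v e_def nlap_non)
  qed
  have Trf1: "Tr f1 z = nlap V E z t * f1 t + nlap V E z c * f1 c" for z
    by (rule Tr_supp2[OF V(4) V(1)]) (use dist f1o in auto)
  have f2v: "f2 z = Tr f1 z - 3/2 * f1 z" for z by (simp add: f2_def shr_def)
  have "p \<notin> {t, c}" "q \<notin> {t, c}" using dist by auto
  then have f1p: "f1 p = 0" and f1q: "f1 q = 0" using f1o by blast+
  have f2p: "f2 p = a * b" by (simp add: f2v Trf1 npt npc f1p f1c)
  have f2q: "f2 q = a * b" by (simp add: f2v Trf1 nqt nqc f1q f1c)
  have f2c: "f2 c = b * (r - 1/2)" using dist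
    by (simp add: f2v Trf1 nlap_sym[of c t] ntc nlap_diag f1t f1c algebra_simps)
  have f2t: "f2 t = b * b - (1 - r) / 2" using dist
    by (simp add: f2v Trf1 ntc nlap_diag f1t f1c algebra_simps) (simp add: field_simps)
  have q3: "qopr [0, 3/2, r] e u = Tr f2 u" for u unfolding qq by (simp add: shr_def)
  have f3p: "qopr [0, 3/2, r] e p = f2 p + nlap V E p c * f2 c + nlap V E p q * f2 q"
    unfolding q3 using Tr_nbr[OF V(2), of f2] Np dist by simp
  have f3t: "qopr [0, 3/2, r] e t = f2 t + nlap V E t c * f2 c"
    unfolding q3 using Tr_nbr[OF V(4), of f2] Nt by simp
  have "a * b * (1 - r) = 0"
    using ann[OF V(2), unfolded f3p] f2p f2q f2c npc npq by (simp add: algebra_simps)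
  then have r1: "r = 1" using apos bpos by simp
  have "b * b / 2 = 0"
    using ann[OF V(4), unfolded f3t] f2t f2c ntc r1 by (simp add: algebra_simps)
  then show False using bpos by simp
qed

end


lemma c4_poly:
  fixes x0 x1 x2 x3 \<mu> :: real
  assumes "x0 - x1 / 2 - x3 / 2 = \<mu> * x0" "x1 - x0 / 2 - x2 / 2 = \<mu> * x1"
    "x2 - x1 / 2 - x3 / 2 = \<mu> * x2" "x3 - x2 / 2 - x0 / 2 = \<mu> * x3"
  shows "\<mu> * (\<mu> - 1) * (\<mu> - 2) * x0 = 0"
  using assms by algebra

lemma c5_poly:
  fixes x0 x1 x2 x3 x4 \<mu> :: real
  assumes "x0 - x4 / 2 - x1 / 2 = \<mu> * x0" "x1 - x0 / 2 - x2 / 2 = \<mu> * x1"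
    "x2 - x1 / 2 - x3 / 2 = \<mu> * x2" "x3 - x2 / 2 - x4 / 2 = \<mu> * x3" "x4 - x3 / 2 - x0 / 2 = \<mu> * x4"
  shows "\<mu> * (4 * \<mu>^2 - 10 * \<mu> + 5) * x0 = 0"
  using assms by algebra


context ugraph
begin

lemma cyc_verts:
  assumes "is_cycle_graph V E n" and "i < n" "j < n"
  obtains g where "bij_betw g {..<n} V" "\<And>i. i < n \<Longrightarrow> g i \<in> V"
    "\<And>i j. i < n \<Longrightarrow> j < n \<Longrightarrow> E (g i) (g j) \<longleftrightarrow> ((i + 1) mod n = j \<or> (j + 1) mod n = i)"
proof -
  obtain f where bij: "bij_betw f V {..<n}"
    and adj: "\<forall>u\<in>V. \<forall>v\<in>V. E u v \<longleftrightarrow> ((f u + 1) mod n = f v \<or> (f v + 1) mod n = f u)"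
    using assms by (auto simp: is_cycle_graph_def)
  define g where "g = inv_into V f"
  have gb: "bij_betw g {..<n} V" using bij_betw_inv_into[OF bij] by (simp add: g_def)
  have fg: "i < n \<Longrightarrow> f (g i) = i" for i using bij_betw_inv_into_right[OF bij] by (simp add: g_def)
  have gV: "i < n \<Longrightarrow> g i \<in> V" for i using gb by (auto simp: bij_betw_def)
  show ?thesis
  proof (rule that[OF gb gV])
    fix i j assume "i < n" "j < n"
    then show "E (g i) (g j) \<longleftrightarrow> ((i + 1) mod n = j \<or> (j + 1) mod n = i)"
      using adj gV fg by simp
  qed (simp add: gV)
qed

lemma cyc4_verts:
  assumes "is_cycle_graph V E 4"
  shows "\<exists>a0 a1 a2 a3. V = {a0, a1, a2, a3} \<and> distinct [a0, a1, a2, a3] \<and> E a0 a1 \<and> E a1 a2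
     \<and> E a2 a3 \<and> E a3 a0 \<and> \<not> E a0 a2 \<and> \<not> E a1 a3"
proof -
  obtain g where gb: "bij_betw g {..<(4::nat)} V" and gV: "\<And>i. i < (4::nat) \<Longrightarrow> g i \<in> V"
    and Eg: "\<And>i j. i < (4::nat) \<Longrightarrow> j < 4 \<Longrightarrow> E (g i) (g j) \<longleftrightarrow> ((i + 1) mod 4 = j \<or> (j + 1) mod 4 = i)"
    using cyc_verts[OF assms, of 0 0] by auto
  have "V = g ` {..<4}" using gb by (simp add: bij_betw_def)
  moreover have "{..<4::nat} = {0, 1, 2, 3}" by auto
  ultimately have V: "V = {g 0, g 1, g 2, g 3}" by simp
  have inj: "inj_on g {..<4}" using gb by (simp add: bij_betw_def)
  have gi: "\<And>i j. i < (4::nat) \<Longrightarrow> j < 4 \<Longrightarrow> g i = g j \<longleftrightarrow> i = j"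
    using inj by (simp add: inj_on_eq_iff)
  have d: "distinct [g 0, g 1, g 2, g 3]" using gi[of 0 1] gi[of 0 2] gi[of 0 3] gi[of 1 2] gi[of 1 3] gi[of 2 3] by auto
  show ?thesis
    by (rule exI[of _ "g 0"], rule exI[of _ "g 1"], rule exI[of _ "g 2"], rule exI[of _ "g 3"])
       (use d in \<open>simp add: V Eg\<close>)
qed

lemma cyc5_verts:
  assumes "is_cycle_graph V E 5"
  shows "\<exists>a0 a1 a2 a3 a4. V = {a0, a1, a2, a3, a4} \<and> distinct [a0, a1, a2, a3, a4] \<and> E a0 a1 \<and> E a1 a2
     \<and> E a2 a3 \<and> E a3 a4 \<and> E a4 a0 \<and> \<not> E a0 a2 \<and> \<not> E a0 a3 \<and> \<not> E a1 a3 \<and> \<not> E a1 a4 \<and> \<not> E a2 a4"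
proof -
  obtain g where gb: "bij_betw g {..<(5::nat)} V" and gV: "\<And>i. i < (5::nat) \<Longrightarrow> g i \<in> V"
    and Eg: "\<And>i j. i < (5::nat) \<Longrightarrow> j < 5 \<Longrightarrow> E (g i) (g j) \<longleftrightarrow> ((i + 1) mod 5 = j \<or> (j + 1) mod 5 = i)"
    using cyc_verts[OF assms, of 0 0] by auto
  have "V = g ` {..<5}" using gb by (simp add: bij_betw_def)
  moreover have "{..<5::nat} = {0, 1, 2, 3, 4}" by auto
  ultimately have V: "V = {g 0, g 1, g 2, g 3, g 4}" by simp
  have inj: "inj_on g {..<5}" using gb by (simp add: bij_betw_def)
  have gi: "\<And>i j. i < (5::nat) \<Longrightarrow> j < 5 \<Longrightarrow> g i = g j \<longleftrightarrow> i = j"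
    using inj by (simp add: inj_on_eq_iff)
  have d: "distinct [g 0, g 1, g 2, g 3, g 4]" using gi[of 0 1] gi[of 0 2] gi[of 0 3] gi[of 0 4] gi[of 1 2] gi[of 1 3] gi[of 1 4] gi[of 2 3] gi[of 2 4] gi[of 3 4] by auto
  show ?thesis
    by (rule exI[of _ "g 0"], rule exI[of _ "g 1"], rule exI[of _ "g 2"], rule exI[of _ "g 3"], rule exI[of _ "g 4"])
       (use d in \<open>simp add: V Eg\<close>)
qed

lemma Tr_deg2:
  assumes "u \<in> V" "nbr V E u = {v, w}" "v \<noteq> w" "card (nbr V E v) = 2" "card (nbr V E w) = 2"
  shows "Tr x u = x u - x v / 2 - x w / 2"
proof -
  have "E u v" "E u w" using assms(2) by (auto simp: nbr_def)
  have "nlap V E u v = - 1/2" using nlap_val[OF \<open>E u v\<close> assms(2) refl] assms(3,4) by (simp add: sqrt4)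
  moreover have "nlap V E u w = - 1/2" using nlap_val[OF \<open>E u w\<close> assms(2) refl] assms(3,5) by (simp add: sqrt4)
  ultimately show ?thesis using Tr_nbr[OF assms(1), of x] assms(2,3) by simp
qed


lemma c4_S:
  assumes V: "V = {a0, a1, a2, a3}" and d: "distinct [a0, a1, a2, a3]"
    and e: "E a0 a1" "E a1 a2" "E a2 a3" "E a3 a0" and ne: "\<not> E a0 a2" "\<not> E a1 a3"
  shows "{\<mu>. nlap_eigenvalue V E \<mu>} = {0, 1, 2}"
proof -
  have N0: "nbr V E a0 = {a1, a3}" using V d e ne Esym Eirr by (auto simp: nbr_def)
  have N1: "nbr V E a1 = {a0, a2}" using V d e ne Esym Eirr by (auto simp: nbr_def)
  have N2: "nbr V E a2 = {a1, a3}" using V d e ne Esym Eirr by (auto simp: nbr_def)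
  have N3: "nbr V E a3 = {a2, a0}" using V d e ne Esym Eirr by (auto simp: nbr_def)
  have c: "card (nbr V E a0) = 2" "card (nbr V E a1) = 2" "card (nbr V E a2) = 2" "card (nbr V E a3) = 2"
    using d by (auto simp: N0 N1 N2 N3)
  have inV: "a0 \<in> V" "a1 \<in> V" "a2 \<in> V" "a3 \<in> V" using V by auto
  have T0: "Tr x a0 = x a0 - x a1 / 2 - x a3 / 2" for x by (rule Tr_deg2[OF inV(1) N0]) (use d c in auto)
  have T1: "Tr x a1 = x a1 - x a0 / 2 - x a2 / 2" for x by (rule Tr_deg2[OF inV(2) N1]) (use d c in auto)
  have T2: "Tr x a2 = x a2 - x a1 / 2 - x a3 / 2" for x by (rule Tr_deg2[OF inV(3) N2]) (use d c in auto)
  have T3: "Tr x a3 = x a3 - x a2 / 2 - x a0 / 2" for x by (rule Tr_deg2[OF inV(4) N3]) (use d c in auto)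
  have eigI: "nlap_eigenvalue V E \<mu>"
    if h: "ya - yb / 2 - yd / 2 = \<mu> * ya" "yb - ya / 2 - yc / 2 = \<mu> * yb"
      "yc - yb / 2 - yd / 2 = \<mu> * yc" "yd - yc / 2 - ya / 2 = \<mu> * yd" "ya \<noteq> 0" for \<mu> ya yb yc yd
  proof -
    define x where "x v = (if v = a0 then ya else if v = a1 then yb else if v = a2 then yc else yd)" for v
    have xv: "x a0 = ya" "x a1 = yb" "x a2 = yc" "x a3 = yd" using d by (auto simp: x_def)
    have "\<forall>u\<in>V. Tr x u = \<mu> * x u"
    proof
      fix u assume "u \<in> V"
      then have "u = a0 \<or> u = a1 \<or> u = a2 \<or> u = a3" using V by simp
      then show "Tr x u = \<mu> * x u" using h by (auto simp: T0 T1 T2 T3 xv)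
    qed
    then show ?thesis unfolding eig_Tr using inV(1) xv h(5) by blast
  qed
  show ?thesis
  proof
    show "{\<mu>. nlap_eigenvalue V E \<mu>} \<subseteq> {0, 1, 2}"
    proof
      fix \<mu> assume "\<mu> \<in> {\<mu>. nlap_eigenvalue V E \<mu>}"
      then obtain x where x: "\<exists>u\<in>V. x u \<noteq> 0" "\<forall>u\<in>V. Tr x u = \<mu> * x u" by (auto simp: eig_Tr)
      have q0: "x a0 - x a1 / 2 - x a3 / 2 = \<mu> * x a0" using x(2) inV T0 by metis
      have q1: "x a1 - x a0 / 2 - x a2 / 2 = \<mu> * x a1" using x(2) inV T1 by metis
      have q2: "x a2 - x a1 / 2 - x a3 / 2 = \<mu> * x a2" using x(2) inV T2 by metis
      have q3: "x a3 - x a2 / 2 - x a0 / 2 = \<mu> * x a3" using x(2) inV T3 by metis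
      have "\<mu> * (\<mu> - 1) * (\<mu> - 2) * x a0 = 0" using q0 q1 q2 q3 by algebra
      moreover have "\<mu> * (\<mu> - 1) * (\<mu> - 2) * x a1 = 0" using q0 q1 q2 q3 by algebra
      moreover have "\<mu> * (\<mu> - 1) * (\<mu> - 2) * x a2 = 0" using q0 q1 q2 q3 by algebra
      moreover have "\<mu> * (\<mu> - 1) * (\<mu> - 2) * x a3 = 0" using q0 q1 q2 q3 by algebra
      moreover have "x a0 \<noteq> 0 \<or> x a1 \<noteq> 0 \<or> x a2 \<noteq> 0 \<or> x a3 \<noteq> 0" using x(1) V by auto
      ultimately have "\<mu> * (\<mu> - 1) * (\<mu> - 2) = 0" by auto
      then show "\<mu> \<in> {0, 1, 2}" by auto
    qed
    show "{0, 1, 2} \<subseteq> {\<mu>. nlap_eigenvalue V E \<mu>}"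
    proof -
      have "nlap_eigenvalue V E 0" by (rule eigI[where \<mu>=0 and ya=1 and yb=1 and yc=1 and yd=1]) simp_all
      moreover have "nlap_eigenvalue V E 1" by (rule eigI[where \<mu>=1 and ya=1 and yb=0 and yc="-1" and yd=0]) simp_all
      moreover have "nlap_eigenvalue V E 2" by (rule eigI[where \<mu>=2 and ya=1 and yb="-1" and yc=1 and yd="-1"]) simp_all
      ultimately show ?thesis by simp
    qed
  qed
qed

lemma c5_S:
  assumes V: "V = {a0, a1, a2, a3, a4}" and d: "distinct [a0, a1, a2, a3, a4]"
    and e: "E a0 a1" "E a1 a2" "E a2 a3" "E a3 a4" "E a4 a0"
    and ne: "\<not> E a0 a2" "\<not> E a0 a3" "\<not> E a1 a3" "\<not> E a1 a4" "\<not> E a2 a4"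
  shows "{\<mu>. nlap_eigenvalue V E \<mu>} = {\<mu>. \<mu> = 0 \<or> 4 * \<mu>^2 - 10 * \<mu> + 5 = 0}"
proof -
  have N0: "nbr V E a0 = {a4, a1}" using V d e ne Esym Eirr by (auto simp: nbr_def)
  have N1: "nbr V E a1 = {a0, a2}" using V d e ne Esym Eirr by (auto simp: nbr_def)
  have N2: "nbr V E a2 = {a1, a3}" using V d e ne Esym Eirr by (auto simp: nbr_def)
  have N3: "nbr V E a3 = {a2, a4}" using V d e ne Esym Eirr by (auto simp: nbr_def)
  have N4: "nbr V E a4 = {a3, a0}" using V d e ne Esym Eirr by (auto simp: nbr_def)
  have c: "card (nbr V E a0) = 2" "card (nbr V E a1) = 2" "card (nbr V E a2) = 2" "card (nbr V E a3) = 2"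
    "card (nbr V E a4) = 2"
    using d by (auto simp: N0 N1 N2 N3 N4)
  have inV: "a0 \<in> V" "a1 \<in> V" "a2 \<in> V" "a3 \<in> V" "a4 \<in> V" using V by auto
  have T0: "Tr x a0 = x a0 - x a4 / 2 - x a1 / 2" for x by (rule Tr_deg2[OF inV(1) N0]) (use d c in auto)
  have T1: "Tr x a1 = x a1 - x a0 / 2 - x a2 / 2" for x by (rule Tr_deg2[OF inV(2) N1]) (use d c in auto)
  have T2: "Tr x a2 = x a2 - x a1 / 2 - x a3 / 2" for x by (rule Tr_deg2[OF inV(3) N2]) (use d c in auto)
  have T3: "Tr x a3 = x a3 - x a2 / 2 - x a4 / 2" for x by (rule Tr_deg2[OF inV(4) N3]) (use d c in auto)
  have T4: "Tr x a4 = x a4 - x a3 / 2 - x a0 / 2" for x by (rule Tr_deg2[OF inV(5) N4]) (use d c in auto)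
  have eigI: "nlap_eigenvalue V E \<mu>"
    if h: "2 * ya - ye - yb = 2 * \<mu> * ya" "2 * yb - ya - yc = 2 * \<mu> * yb"
      "2 * yc - yb - yd = 2 * \<mu> * yc" "2 * yd - yc - ye = 2 * \<mu> * yd" "2 * ye - yd - ya = 2 * \<mu> * ye"
      "ya \<noteq> 0" for \<mu> ya yb yc yd ye
  proof -
    define x where "x v = (if v = a0 then ya else if v = a1 then yb else if v = a2 then yc
      else if v = a3 then yd else ye)" for v
    have xv: "x a0 = ya" "x a1 = yb" "x a2 = yc" "x a3 = yd" "x a4 = ye" using d by (auto simp: x_def)
    have "\<forall>u\<in>V. Tr x u = \<mu> * x u"
    proof
      fix u assume "u \<in> V"
      then have "u = a0 \<or> u = a1 \<or> u = a2 \<or> u = a3 \<or> u = a4" using V by simp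
      then show "Tr x u = \<mu> * x u" using h by (auto simp: T0 T1 T2 T3 T4 xv field_simps)
    qed
    then show ?thesis unfolding eig_Tr using inV(1) xv h(6) by blast
  qed
  show ?thesis
  proof
    show "{\<mu>. nlap_eigenvalue V E \<mu>} \<subseteq> {\<mu>. \<mu> = 0 \<or> 4 * \<mu>^2 - 10 * \<mu> + 5 = 0}"
    proof
      fix \<mu> assume "\<mu> \<in> {\<mu>. nlap_eigenvalue V E \<mu>}"
      then obtain x where x: "\<exists>u\<in>V. x u \<noteq> 0" "\<forall>u\<in>V. Tr x u = \<mu> * x u" by (auto simp: eig_Tr)
      have q0: "x a0 - x a4 / 2 - x a1 / 2 = \<mu> * x a0" using x(2) inV T0 by metis
      have q1: "x a1 - x a0 / 2 - x a2 / 2 = \<mu> * x a1" using x(2) inV T1 by metis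
      have q2: "x a2 - x a1 / 2 - x a3 / 2 = \<mu> * x a2" using x(2) inV T2 by metis
      have q3: "x a3 - x a2 / 2 - x a4 / 2 = \<mu> * x a3" using x(2) inV T3 by metis
      have q4: "x a4 - x a3 / 2 - x a0 / 2 = \<mu> * x a4" using x(2) inV T4 by metis
      have "\<mu> * (4 * \<mu>^2 - 10 * \<mu> + 5) * x a0 = 0" using q0 q1 q2 q3 q4 by algebra
      moreover have "\<mu> * (4 * \<mu>^2 - 10 * \<mu> + 5) * x a1 = 0" using q0 q1 q2 q3 q4 by algebra
      moreover have "\<mu> * (4 * \<mu>^2 - 10 * \<mu> + 5) * x a2 = 0" using q0 q1 q2 q3 q4 by algebra
      moreover have "\<mu> * (4 * \<mu>^2 - 10 * \<mu> + 5) * x a3 = 0" using q0 q1 q2 q3 q4 by algebra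
      moreover have "\<mu> * (4 * \<mu>^2 - 10 * \<mu> + 5) * x a4 = 0" using q0 q1 q2 q3 q4 by algebra
      moreover have "x a0 \<noteq> 0 \<or> x a1 \<noteq> 0 \<or> x a2 \<noteq> 0 \<or> x a3 \<noteq> 0 \<or> x a4 \<noteq> 0" using x(1) V by auto
      ultimately have "\<mu> * (4 * \<mu>^2 - 10 * \<mu> + 5) = 0" by auto
      then show "\<mu> \<in> {\<mu>. \<mu> = 0 \<or> 4 * \<mu>^2 - 10 * \<mu> + 5 = 0}" by auto
    qed
    show "{\<mu>. \<mu> = 0 \<or> 4 * \<mu>^2 - 10 * \<mu> + 5 = 0} \<subseteq> {\<mu>. nlap_eigenvalue V E \<mu>}"
    proof
      fix \<mu> :: real assume "\<mu> \<in> {\<mu>. \<mu> = 0 \<or> 4 * \<mu>^2 - 10 * \<mu> + 5 = 0}"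
      then have "\<mu> = 0 \<or> 4 * \<mu>^2 - 10 * \<mu> + 5 = 0" by simp
      then show "\<mu> \<in> {\<mu>. nlap_eigenvalue V E \<mu>}"
      proof
        assume "\<mu> = 0"
        moreover have "nlap_eigenvalue V E 0" by (rule eigI[where \<mu>=0 and ya=1 and yb=1 and yc=1 and yd=1 and ye=1]) simp_all
        ultimately show ?thesis by simp
      next
        assume q: "4 * \<mu>^2 - 10 * \<mu> + 5 = 0"
        define t where "t = 2 - 2 * \<mu>"
        have "nlap_eigenvalue V E \<mu>"
        proof (rule eigI[where \<mu>=\<mu> and ya=2 and yb="t" and yc="t^2 - 2" and yd="t^2 - 2" and ye="t"])
          show "2 * 2 - t - t = 2 * \<mu> * 2" unfolding t_def by simp
          show "2 * t - 2 - (t\<^sup>2 - 2) = 2 * \<mu> * t" unfolding t_def by (simp add: power2_eq_square algebra_simps)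
          show "2 * (t\<^sup>2 - 2) - t - (t\<^sup>2 - 2) = 2 * \<mu> * (t\<^sup>2 - 2)" using q unfolding t_def by algebra
          show "2 * (t\<^sup>2 - 2) - (t\<^sup>2 - 2) - t = 2 * \<mu> * (t\<^sup>2 - 2)" using q unfolding t_def by algebra
          show "2 * t - (t\<^sup>2 - 2) - 2 = 2 * \<mu> * t" unfolding t_def by (simp add: power2_eq_square algebra_simps)
        qed simp
        then show ?thesis by simp
      qed
    qed
  qed
qed

lemma quad5: "{\<mu>::real. \<mu> = 0 \<or> 4 * \<mu>^2 - 10 * \<mu> + 5 = 0} = {0, (5 - sqrt 5) / 4, (5 + sqrt 5) / 4}"
proof -
  have s5: "sqrt 5 * sqrt 5 = 5" by simp
  have f0: "4 * (4 * \<mu>^2 - 10 * \<mu> + 5) = (4 * \<mu> - 5 + s) * (4 * \<mu> - 5 - s)" if "s * s = 5" for \<mu> s :: real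
    using that by (simp add: algebra_simps power2_eq_square)
  have f: "4 * (4 * \<mu>^2 - 10 * \<mu> + 5) = (4 * \<mu> - 5 + sqrt 5) * (4 * \<mu> - 5 - sqrt 5)" for \<mu> :: real
    by (rule f0) (rule s5)
  have g: "4 * \<mu>^2 - 10 * \<mu> + 5 = 0 \<longleftrightarrow> \<mu> = (5 - sqrt 5) / 4 \<or> \<mu> = (5 + sqrt 5) / 4" for \<mu> :: real
  proof -
    have "4 * \<mu>^2 - 10 * \<mu> + 5 = 0 \<longleftrightarrow> (4 * \<mu> - 5 + sqrt 5) * (4 * \<mu> - 5 - sqrt 5) = 0"
      using f[of \<mu>] by (metis mult_eq_0_iff zero_neq_numeral)
    also have "\<dots> \<longleftrightarrow> (4 * \<mu> - 5 + sqrt 5 = 0 \<or> 4 * \<mu> - 5 - sqrt 5 = 0)" by (rule mult_eq_0_iff)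
    also have "\<dots> \<longleftrightarrow> \<mu> = (5 - sqrt 5) / 4 \<or> \<mu> = (5 + sqrt 5) / 4" by (auto simp: field_simps)
    finally show ?thesis .
  qed
  show ?thesis by (auto simp: g)
qed

lemma card_quad5: "card {0::real, (5 - sqrt 5) / 4, (5 + sqrt 5) / 4} = 3"
proof -
  have "sqrt 25 = 5" by (rule real_sqrt_unique) simp_all
  moreover have "sqrt 5 < sqrt 25" by (simp only: real_sqrt_less_iff)
  ultimately have s1: "sqrt 5 < 5" by simp
  have s2: "sqrt 5 > 0" by simp
  have "(5 - sqrt 5) / 4 > 0" using s1 by simp
  moreover have "(5 + sqrt 5) / 4 > 0" using s2 by (simp add: add_pos_pos)
  moreover have "(5 - sqrt 5) / 4 < (5 + sqrt 5) / 4" using s2 by (simp add: divide_strict_right_mono)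
  ultimately have A: "(0::real) \<noteq> (5 - sqrt 5) / 4" and B: "(0::real) \<noteq> (5 + sqrt 5) / 4"
    and C: "(5 - sqrt 5) / 4 \<noteq> (5 + sqrt 5) / 4" by simp_all
  show ?thesis
    by (rule card_3_iff[THEN iffD2], rule exI[of _ 0], rule exI[of _ "(5 - sqrt 5) / 4"],
        rule exI[of _ "(5 + sqrt 5) / 4"]) (use A B C in simp)
qed

end


theorem theorem4p1:
  fixes V :: "'a set" and E :: "'a \<Rightarrow> 'a \<Rightarrow> bool"
  assumes "unicyclic V E"
  shows "card {\<mu>. nlap_eigenvalue V E \<mu>} = 3 \<longleftrightarrow> is_cycle_graph V E 4 \<or> is_cycle_graph V E 5"
proof -
  have sg: "simple_graph V E" and conn: "connected_graph V E" and cE: "card (graph_edges E) = card V"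
    using assms by (auto simp: unicyclic_def)
  interpret ugraph V E by unfold_locales (rule sg)
  show ?thesis
  proof
    assume c3: "card {\<mu>. nlap_eigenvalue V E \<mu>} = 3"
    from c3[unfolded card_3_iff] obtain a b c where S: "{\<mu>. nlap_eigenvalue V E \<mu>} = {a, b, c}"
      by (elim exE conjE)
    have eigs: "\<mu> \<in> set [a, b, c]" if h: "nlap_eigenvalue V E \<mu>" for \<mu>
    proof -
      have "\<mu> \<in> {\<mu>. nlap_eigenvalue V E \<mu>}" using h by simp
      then have "\<mu> \<in> {a, b, c}" by (simp only: S)
      then show ?thesis by simp
    qed
    have d2: "\<forall>u\<in>V. \<forall>w\<in>V. near2 u w"
      using diam2[OF conn eigs] by blast
    from classify[OF conn cE d2]
    show "is_cycle_graph V E 4 \<or> is_cycle_graph V E 5"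
    proof (elim disjE exE conjE)
      fix c p q assume V: "V = {c, p, q}" and d: "distinct [c, p, q]" and e: "E c p" "E c q" "E p q"
      have sub: "{\<mu>. nlap_eigenvalue V E \<mu>} \<subseteq> {0, 3/2}" by (rule c3_spec[OF V d e])
      have "card {\<mu>. nlap_eigenvalue V E \<mu>} \<le> card {0::real, 3/2}" by (rule card_mono[OF _ sub]) simp
      also have "\<dots> \<le> 2" by (simp add: card_insert_if)
      finally show ?thesis using c3 by simp
    next
      fix c p q t assume "c \<in> V" "p \<in> V" "q \<in> V" "t \<in> V" "distinct [c, p, q, t]"
        "nbr V E t = {c}" "nbr V E p = {c, q}" "nbr V E q = {c, p}"
      from stare_false[OF this c3] show ?thesis ..
    qed simp_all
  next
    assume "is_cycle_graph V E 4 \<or> is_cycle_graph V E 5"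
    then show "card {\<mu>. nlap_eigenvalue V E \<mu>} = 3"
    proof
      assume "is_cycle_graph V E 4"
      from cyc4_verts[OF this] obtain a0 a1 a2 a3 where
        h: "V = {a0, a1, a2, a3}" "distinct [a0, a1, a2, a3]" "E a0 a1" "E a1 a2" "E a2 a3" "E a3 a0"
          "\<not> E a0 a2" "\<not> E a1 a3" by blast
      have "{\<mu>. nlap_eigenvalue V E \<mu>} = {0, 1, 2}" by (rule c4_S[OF h])
      then show ?thesis by simp
    next
      assume "is_cycle_graph V E 5"
      from cyc5_verts[OF this] obtain a0 a1 a2 a3 a4 where
        h: "V = {a0, a1, a2, a3, a4}" "distinct [a0, a1, a2, a3, a4]" "E a0 a1" "E a1 a2" "E a2 a3"
          "E a3 a4" "E a4 a0" "\<not> E a0 a2" "\<not> E a0 a3" "\<not> E a1 a3" "\<not> E a1 a4" "\<not> E a2 a4" by blast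
      have "{\<mu>. nlap_eigenvalue V E \<mu>} = {0, (5 - sqrt 5) / 4, (5 + sqrt 5) / 4}"
        using c5_S[OF h] quad5 by simp
      then show ?thesis using card_quad5 by simp
    qed
  qed
qed

end
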